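(* In the FAVANO process (with either choice of weights $\alpha^i_{t+1}$), assume each $\nabla f_i$ is $L$-Lipschitz, the stochastic gradients have bounded variance $\sigma^2$, the bounded gradient dissimilarity condition holds with constants $G^2\ge0$, $B^2\ge1$, and $\eta<\frac{1}{4LK^2}$ and $\eta<\frac{1}{2LK}$. Then for every time step $t\ge0$, $$\sum_{i=1}^n\mathbb{E}\big\langle\nabla f(\mu_t),-\check h^i_{t+1}\big\rangle\le 20L^2\,\mathbb{E}[\Phi_t]+4nL^2\eta^2K^2(\sigma^2+4G^2)+n\Big(16L^2\eta^2K^2B^2-\frac34\Big)\mathbb{E}\|\nabla f(\mu_t)\|^2 .$$
   Context: FAVANO process. Fix integers $n\ge1$, $1\le s\le n$, $K\ge1$, $d\ge1$, a step size $\eta>0$ and differentiable $f_1,\dots,f_n:\mathbb{R}^d\to\mathbb{R}$, $f=\frac1n\sum_i f_i$. All random variables live on one probability space. For each client $i$ a stochastic gradient oracle returns, at a query point $x$, $\widetilde g^i(x)=\nabla f_i(x)+\xi$ where, conditionally on everything generated before the query (including $x$), $\xi$ has mean zero (each query uses fresh noise). Initialize $w_0\in\mathbb{R}^d$ deterministic and $w_0^i=w_0$ for all $i$. For each $t\ge1$, each client $i$ and each $q\ge1$ define recursively $\widetilde h^i_{t,q}=\widetilde g^i\big(w^i_{t-1}-\eta\sum_{r=1}^{q-1}\widetilde h^i_{t,r}\big)$ and $h^i_{t,q}=\nabla f_i\big(w^i_{t-1}-\eta\sum_{r=1}^{q-1}\widetilde h^i_{t,r}\big)$. At each $t\ge1$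 there are random integers $E^1_t,\dots,E^n_t\ge0$ with $\mathbf{P}(E^i_t>0)>0$, and a random subset $\mathcal{S}_t\subseteq\{1,\dots,n\}$ uniformly distributed among subsets of size $s$; the family $(\mathcal S_t,E^1_t,\dots,E^n_t)$ is independent of all the other randomness (the past up to time $t-1$ and all $\widetilde h^i_{t,q}$), and $\mathcal S_t$ is independent of $(E^i_t)_i$. The weight $\alpha^i_t$ is either $\mathbf{P}(E^i_t>0)\,(E^i_t\wedge K)$ (stochastic version) or $\mathbb{E}[E^i_t\wedge K]$ (deterministic version), where $a\wedge b=\min(a,b)$. Set $\check h^i_t=\frac{1}{\alpha^i_t}\sum_{q=1}^{E^i_t\wedge K}\widetilde h^i_{t,q}$ if $E^i_t>0$ and $\check h^i_t=0$ otherwise. Updates: $w_t=\frac{1}{s+1}\big(w_{t-1}+\sum_{i\in\mathcal S_t}(w^i_{t-1}-\eta\check h^i_t)\big)$; $w^i_t=w_t$ for $i\in\mathcal S_t$ and $w^i_t=w^i_{t-1}$ for $i\notin\mathcal S_t$. Define $\mu_t=\frac{1}{n+1}\big(w_t+\sum_{i=1}^n w^i_t\big)$ and $\Phi_t=\|w_t-\mu_t\|^2+\sum_{i=1}^n\|w^i_t-\mu_t\|^2$. All expectations appearing are assumed finite. Smoothness: $\|\nabla f_i(x)-\nabla f_i(y)\|\le L\|x-y\|$ for all $i,x,y$, with $L>0$. Bounded variance: conditionally on everything generated before a query at $x$, $\mathbb{E}\|\widetilde g^i(x)-\nabla f_i(x)\|^2\le\sigma^2$. Bounded gradient dissimilarity: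 for all $x\in\mathbb{R}^d$, $\frac1n\sum_{i=1}^n\|\nabla f_i(x)\|^2\le G^2+B^2\|\nabla f(x)\|^2$. *)

theory Defs
  imports "HOL-Probability.Probability"
begin

text \<open>Clients are indexed by i in {1..n}, rounds by t, local steps by q >= 1.
  Random objects are functions of the sample point w in the space of a probability measure M.
  htil t i q is the stochastic gradient returned at the q-th local query of client i in round t,
  E t i the number of local steps, S t the sampled subset.\<close>

definition hcheck :: "real \<Rightarrow> nat \<Rightarrow> nat \<Rightarrow> (nat \<Rightarrow> 'v::real_vector) \<Rightarrow> 'v" where
  "hcheck alpha K e ht = (if e > 0 then (1 / alpha) *\<^sub>R (\<Sum>q = 1..min e K. ht q) else 0)"

text \<open>Pathwise recursion of the server and client iterates (w_t, (w^i_t)_i).\<close>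
fun fav_state :: "real \<Rightarrow> nat \<Rightarrow> 'v::real_vector \<Rightarrow> (nat \<Rightarrow> nat set) \<Rightarrow> (nat \<Rightarrow> nat \<Rightarrow> 'v)
    \<Rightarrow> nat \<Rightarrow> 'v \<times> (nat \<Rightarrow> 'v)" where
  "fav_state \<eta> s w0 S hc 0 = (w0, (\<lambda>i. w0))"
| "fav_state \<eta> s w0 S hc (Suc t) =
     (let w = fst (fav_state \<eta> s w0 S hc t); wi = snd (fav_state \<eta> s w0 S hc t);
          w' = (1 / real (s + 1)) *\<^sub>R (w + (\<Sum>i\<in>S (Suc t). wi i - \<eta> *\<^sub>R hc (Suc t) i))
      in (w', (\<lambda>i. if i \<in> S (Suc t) then w' else wi i)))"

definition fav_alpha :: "'a measure \<Rightarrow> bool \<Rightarrow> nat \<Rightarrow> (nat \<Rightarrow> nat \<Rightarrow> 'a \<Rightarrow> nat)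
    \<Rightarrow> nat \<Rightarrow> nat \<Rightarrow> 'a \<Rightarrow> real" where
  "fav_alpha M stoch K E t i \<omega> =
     (if stoch then measure M {\<omega>' \<in> space M. E t i \<omega>' > 0} * real (min (E t i \<omega>) K)
      else (\<integral>\<omega>'. real (min (E t i \<omega>') K) \<partial>M))"

definition fav_hc :: "'a measure \<Rightarrow> bool \<Rightarrow> nat \<Rightarrow> (nat \<Rightarrow> nat \<Rightarrow> 'a \<Rightarrow> nat)
    \<Rightarrow> (nat \<Rightarrow> nat \<Rightarrow> nat \<Rightarrow> 'a \<Rightarrow> 'v::real_vector) \<Rightarrow> nat \<Rightarrow> nat \<Rightarrow> 'a \<Rightarrow> 'v" where
  "fav_hc M stoch K E htil t i \<omega> =
     hcheck (fav_alpha M stoch K E t i \<omega>) K (E t i \<omega>) (\<lambda>q. htil t i q \<omega>)"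

definition fav_path :: "'a measure \<Rightarrow> bool \<Rightarrow> nat \<Rightarrow> real \<Rightarrow> nat \<Rightarrow> 'v::real_vector
    \<Rightarrow> (nat \<Rightarrow> 'a \<Rightarrow> nat set) \<Rightarrow> (nat \<Rightarrow> nat \<Rightarrow> 'a \<Rightarrow> nat)
    \<Rightarrow> (nat \<Rightarrow> nat \<Rightarrow> nat \<Rightarrow> 'a \<Rightarrow> 'v) \<Rightarrow> nat \<Rightarrow> 'a \<Rightarrow> 'v \<times> (nat \<Rightarrow> 'v)" where
  "fav_path M stoch K \<eta> s w0 S E htil t \<omega> =
     fav_state \<eta> s w0 (\<lambda>r. S r \<omega>) (\<lambda>r j. fav_hc M stoch K E htil r j \<omega>) t"


definition fav_query :: "'a measure \<Rightarrow> bool \<Rightarrow> nat \<Rightarrow> real \<Rightarrow> nat \<Rightarrow> 'v::real_vector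
    \<Rightarrow> (nat \<Rightarrow> 'a \<Rightarrow> nat set) \<Rightarrow> (nat \<Rightarrow> nat \<Rightarrow> 'a \<Rightarrow> nat)
    \<Rightarrow> (nat \<Rightarrow> nat \<Rightarrow> nat \<Rightarrow> 'a \<Rightarrow> 'v) \<Rightarrow> nat \<Rightarrow> nat \<Rightarrow> nat \<Rightarrow> 'a \<Rightarrow> 'v" where
  "fav_query M stoch K \<eta> s w0 S E htil r i q \<omega> =
     snd (fav_path M stoch K \<eta> s w0 S E htil (r - 1) \<omega>) i - \<eta> *\<^sub>R (\<Sum>p = 1..<q. htil r i p \<omega>)"

definition fav_mu :: "'a measure \<Rightarrow> bool \<Rightarrow> nat \<Rightarrow> real \<Rightarrow> nat \<Rightarrow> nat \<Rightarrow> 'v::real_vector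
    \<Rightarrow> (nat \<Rightarrow> 'a \<Rightarrow> nat set) \<Rightarrow> (nat \<Rightarrow> nat \<Rightarrow> 'a \<Rightarrow> nat)
    \<Rightarrow> (nat \<Rightarrow> nat \<Rightarrow> nat \<Rightarrow> 'a \<Rightarrow> 'v) \<Rightarrow> nat \<Rightarrow> 'a \<Rightarrow> 'v" where
  "fav_mu M stoch K \<eta> n s w0 S E htil t \<omega> =
     (let P = fav_path M stoch K \<eta> s w0 S E htil t \<omega> in
       (1 / real (n + 1)) *\<^sub>R (fst P + (\<Sum>i = 1..n. snd P i)))"

definition fav_Phi :: "'a measure \<Rightarrow> bool \<Rightarrow> nat \<Rightarrow> real \<Rightarrow> nat \<Rightarrow> nat \<Rightarrow> 'v::real_normed_vector
    \<Rightarrow> (nat \<Rightarrow> 'a \<Rightarrow> nat set) \<Rightarrow> (nat \<Rightarrow> nat \<Rightarrow> 'a \<Rightarrow> nat)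
    \<Rightarrow> (nat \<Rightarrow> nat \<Rightarrow> nat \<Rightarrow> 'a \<Rightarrow> 'v) \<Rightarrow> nat \<Rightarrow> 'a \<Rightarrow> real" where
  "fav_Phi M stoch K \<eta> n s w0 S E htil t \<omega> =
     (let P = fav_path M stoch K \<eta> s w0 S E htil t \<omega>; m = fav_mu M stoch K \<eta> n s w0 S E htil t \<omega> in
       norm (fst P - m)^2 + (\<Sum>i = 1..n. norm (snd P i - m)^2))"

definition gen_events :: "'a measure \<Rightarrow> 'b measure \<Rightarrow> ('a \<Rightarrow> 'b) \<Rightarrow> 'a set set" where
  "gen_events M N X = {X -` B \<inter> space M | B. B \<in> sets N}"

definition past_gen :: "'a measure \<Rightarrow> nat \<Rightarrow> (nat \<Rightarrow> 'a \<Rightarrow> nat set) \<Rightarrow> (nat \<Rightarrow> nat \<Rightarrow> 'a \<Rightarrow> nat)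
    \<Rightarrow> (nat \<Rightarrow> nat \<Rightarrow> nat \<Rightarrow> 'a \<Rightarrow> 'v::real_normed_vector) \<Rightarrow> nat \<Rightarrow> 'a set set" where
  "past_gen M n S E htil t =
     (\<Union>r\<in>{1..t}. gen_events M (count_space UNIV) (S r)
        \<union> (\<Union>j\<in>{1..n}. gen_events M (count_space UNIV) (E r j)
        \<union> (\<Union>q\<in>{1..}. gen_events M borel (htil r j q))))"

text \<open>Sigma-algebra of everything generated before the q-th query of client i in round t.\<close>
definition query_sa :: "'a measure \<Rightarrow> nat \<Rightarrow> (nat \<Rightarrow> 'a \<Rightarrow> nat set) \<Rightarrow> (nat \<Rightarrow> nat \<Rightarrow> 'a \<Rightarrow> nat)
    \<Rightarrow> (nat \<Rightarrow> nat \<Rightarrow> nat \<Rightarrow> 'a \<Rightarrow> 'v::real_normed_vector) \<Rightarrow> nat \<Rightarrow> nat \<Rightarrow> nat \<Rightarrow> 'a set set" where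
  "query_sa M n S E htil t i q =
     sigma_sets (space M) (past_gen M n S E htil (t - 1)
        \<union> (\<Union>r\<in>{1..<q}. gen_events M borel (htil t i r)))"

text \<open>Sigma-algebra of all randomness other than (S_t, E_t): past up to t-1 and all htil_{t,q}.\<close>
definition other_sa :: "'a measure \<Rightarrow> nat \<Rightarrow> (nat \<Rightarrow> 'a \<Rightarrow> nat set) \<Rightarrow> (nat \<Rightarrow> nat \<Rightarrow> 'a \<Rightarrow> nat)
    \<Rightarrow> (nat \<Rightarrow> nat \<Rightarrow> nat \<Rightarrow> 'a \<Rightarrow> 'v::real_normed_vector) \<Rightarrow> nat \<Rightarrow> 'a set set" where
  "other_sa M n S E htil t =
     sigma_sets (space M) (past_gen M n S E htil (t - 1)
        \<union> (\<Union>j\<in>{1..n}. \<Union>q\<in>{1..}. gen_events M borel (htil t j q)))"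

end

theory Submission
  imports Defs
begin


lemma meas_gen:
  assumes "G \<subseteq> Pow \<Omega>" "X \<in> \<Omega> \<rightarrow> space N"
    "\<And>B. B \<in> sets N \<Longrightarrow> X -` B \<inter> \<Omega> \<in> sigma_sets \<Omega> G"
  shows "X \<in> measurable (sigma \<Omega> G) N"
  by (rule measurableI) (use assms in \<open>auto simp: sets_measure_of\<close>)

lemma subalg_sigma:
  assumes "G \<subseteq> sets M"
  shows "subalgebra M (sigma (space M) G)"
proof -
  have P: "G \<subseteq> Pow (space M)" using assms sets.sets_into_space by auto
  show ?thesis unfolding subalgebra_def using sets.sigma_sets_subset[OF assms] P
    by (simp add: sets_measure_of)
qed

lemma cond_mean_zero_real:
  fixes X Y :: "'a \<Rightarrow> real"
  assumes M: "prob_space M" and G: "G \<subseteq> sets M"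
   and X: "X \<in> borel_measurable (sigma (space M) G)"
   and Y: "integrable M Y"
   and Z: "\<And>A. A \<in> sigma_sets (space M) G \<Longrightarrow> (\<integral>\<omega>\<in>A. Y \<omega> \<partial>M) = 0"
   and XY: "integrable M (\<lambda>\<omega>. X \<omega> * Y \<omega>)"
  shows "(\<integral>\<omega>. X \<omega> * Y \<omega> \<partial>M) = 0"
proof -
  interpret prob_space M by (rule M)
  let ?F = "sigma (space M) G"
  have sub: "subalgebra M ?F" by (rule subalg_sigma[OF G])
  have P: "G \<subseteq> Pow (space M)" using G sets.sets_into_space by auto
  interpret F: finite_measure_subalgebra M ?F
    using sub by unfold_locales
  have ae: "AE x in M. real_cond_exp M ?F Y x = (\<lambda>_. 0) x"
    by (rule F.real_cond_exp_charact) (use Z P Y in \<open>auto simp: sets_measure_of\<close>)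
  have Ym: "Y \<in> borel_measurable M" using Y by auto
  have Xm: "X \<in> borel_measurable M" by (rule measurable_from_subalg[OF sub X])
  have "(\<integral>\<omega>. X \<omega> * Y \<omega> \<partial>M) = (\<integral>\<omega>. X \<omega> * real_cond_exp M ?F Y \<omega> \<partial>M)"
    using F.real_cond_exp_intg(2)[OF XY X Ym] by simp
  also have "\<dots> = (\<integral>\<omega>. 0 \<partial>M)"
    by (rule integral_cong_AE) (use ae Xm in auto)
  finally show ?thesis by simp
qed

lemma inner_le_sq: "norm ((a::'v::real_inner) \<bullet> b) \<le> norm a ^ 2 + norm b ^ 2"
proof -
  have "\<bar>a \<bullet> b\<bar> \<le> norm a * norm b" by (rule Cauchy_Schwarz_ineq2)
  also have "\<dots> \<le> norm a ^ 2 + norm b ^ 2"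
    using sum_squares_bound[of "norm a" "norm b"] mult_nonneg_nonneg[OF norm_ge_zero norm_ge_zero, of a b]
    by linarith
  finally show ?thesis by simp
qed

lemma integrable_inner_sq:
  fixes a b :: "'a \<Rightarrow> 'v::euclidean_space"
  assumes "a \<in> borel_measurable M" "b \<in> borel_measurable M"
    "integrable M (\<lambda>\<omega>. norm (a \<omega>)^2)" "integrable M (\<lambda>\<omega>. norm (b \<omega>)^2)"
  shows "integrable M (\<lambda>\<omega>. a \<omega> \<bullet> b \<omega>)"
  by (rule Bochner_Integration.integrable_bound[OF Bochner_Integration.integrable_add[OF assms(3,4)]])
     (use assms(1,2) inner_le_sq in auto)

lemma cond_mean_zero_vec:
  fixes X \<xi> :: "'a \<Rightarrow> 'v::euclidean_space"
  assumes M: "prob_space M" and G: "G \<subseteq> sets M"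
   and X: "X \<in> borel_measurable (sigma (space M) G)"
   and \<xi>: "integrable M \<xi>"
   and Z: "\<And>A. A \<in> sigma_sets (space M) G \<Longrightarrow> set_lebesgue_integral M A \<xi> = 0"
   and X2: "integrable M (\<lambda>\<omega>. norm (X \<omega>)^2)" and \<xi>2: "integrable M (\<lambda>\<omega>. norm (\<xi> \<omega>)^2)"
  shows "(\<integral>\<omega>. X \<omega> \<bullet> \<xi> \<omega> \<partial>M) = 0"
proof -
  have sub: "subalgebra M (sigma (space M) G)" by (rule subalg_sigma[OF G])
  have Xm: "X \<in> borel_measurable M" by (rule measurable_from_subalg[OF sub X])
  have \<xi>m: "\<xi> \<in> borel_measurable M" using \<xi> by auto
  have GM: "sigma_sets (space M) G \<subseteq> sets M" using G by (rule sets.sigma_sets_subset)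
  have comp: "(\<integral>\<omega>. (X \<omega> \<bullet> b) * (\<xi> \<omega> \<bullet> b) \<partial>M) = 0" 
       "integrable M (\<lambda>\<omega>. (X \<omega> \<bullet> b) * (\<xi> \<omega> \<bullet> b))" if b: "b \<in> Basis" for b
  proof -
    have nb: "norm b = 1" using b by simp
    have bnd: "norm ((X \<omega> \<bullet> b) * (\<xi> \<omega> \<bullet> b)) \<le> norm (norm (X \<omega>)^2 + norm (\<xi> \<omega>)^2)" for \<omega>
    proof -
      have "\<bar>X \<omega> \<bullet> b\<bar> \<le> norm (X \<omega>)" "\<bar>\<xi> \<omega> \<bullet> b\<bar> \<le> norm (\<xi> \<omega>)"
        using b by (auto simp: Basis_le_norm)
      then have "\<bar>(X \<omega> \<bullet> b) * (\<xi> \<omega> \<bullet> b)\<bar> \<le> norm (X \<omega>) * norm (\<xi> \<omega>)"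
        by (simp add: abs_mult mult_mono)
      also have "\<dots> \<le> norm (X \<omega>)^2 + norm (\<xi> \<omega>)^2"
        using sum_squares_bound[of "norm (X \<omega>)" "norm (\<xi> \<omega>)"] mult_nonneg_nonneg[OF norm_ge_zero norm_ge_zero, of "X \<omega>" "\<xi> \<omega>"]
        by linarith
      finally show ?thesis by simp
    qed
    show int: "integrable M (\<lambda>\<omega>. (X \<omega> \<bullet> b) * (\<xi> \<omega> \<bullet> b))"
      by (rule Bochner_Integration.integrable_bound[OF Bochner_Integration.integrable_add[OF X2 \<xi>2]]) (use Xm \<xi>m bnd in auto)
    have Xb: "(\<lambda>\<omega>. X \<omega> \<bullet> b) \<in> borel_measurable (sigma (space M) G)" using X by measurable
    show "(\<integral>\<omega>. (X \<omega> \<bullet> b) * (\<xi> \<omega> \<bullet> b) \<partial>M) = 0"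
    proof (rule cond_mean_zero_real[OF M G Xb _ _ int])
      show "integrable M (\<lambda>\<omega>. \<xi> \<omega> \<bullet> b)" using \<xi> by auto
      fix A assume A: "A \<in> sigma_sets (space M) G"
      then have AM: "A \<in> sets M" using GM by auto
      have "(\<integral>\<omega>\<in>A. \<xi> \<omega> \<bullet> b \<partial>M) = (\<integral>\<omega>. (indicator A \<omega> *\<^sub>R \<xi> \<omega>) \<bullet> b \<partial>M)"
        unfolding set_lebesgue_integral_def by simp
      also have "\<dots> = (set_lebesgue_integral M A \<xi>) \<bullet> b"
        unfolding set_lebesgue_integral_def
        by (rule integral_inner_left) (rule integrable_mult_indicator[OF AM \<xi>])
      also have "\<dots> = 0" using Z[OF A] by simp
      finally show "(\<integral>\<omega>\<in>A. \<xi> \<omega> \<bullet> b \<partial>M) = 0" .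
    qed
  qed
  have "(\<integral>\<omega>. X \<omega> \<bullet> \<xi> \<omega> \<partial>M) = (\<integral>\<omega>. (\<Sum>b\<in>Basis. (X \<omega> \<bullet> b) * (\<xi> \<omega> \<bullet> b)) \<partial>M)"
    by (rule Bochner_Integration.integral_cong[OF refl], rule euclidean_inner)
  also have "\<dots> = (\<Sum>b\<in>Basis. \<integral>\<omega>. (X \<omega> \<bullet> b) * (\<xi> \<omega> \<bullet> b) \<partial>M)"
    by (rule Bochner_Integration.integral_sum) (use comp in auto)
  also have "\<dots> = 0" using comp by simp
  finally show ?thesis .
qed

lemma indep_factor:
  fixes c :: "nat \<Rightarrow> real" and Z :: "'a \<Rightarrow> real"
  assumes M: "prob_space M" and GA: "GA \<subseteq> sets M" and GC: "GC \<subseteq> sets M"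
   and indep: "\<And>a d. a \<in> sigma_sets (space M) GA \<Longrightarrow> d \<in> sigma_sets (space M) GC \<Longrightarrow>
       measure M (a \<inter> d) = measure M a * measure M d"
   and X: "X \<in> measurable M (count_space UNIV)"
   and XA: "\<And>B. X -` B \<inter> space M \<in> sigma_sets (space M) GA"
   and Zm: "Z \<in> borel_measurable (sigma (space M) GC)" and Zi: "integrable M Z"
   and c: "\<And>e. \<bar>c e\<bar> \<le> C"
  shows "(\<integral>\<omega>. c (X \<omega>) * Z \<omega> \<partial>M) = (\<integral>\<omega>. c (X \<omega>) \<partial>M) * (\<integral>\<omega>. Z \<omega> \<partial>M)"
    "integrable M (\<lambda>\<omega>. c (X \<omega>) * Z \<omega>)"
proof -
  interpret prob_space M by (rule M)
  have subC: "subalgebra M (sigma (space M) GC)" by (rule subalg_sigma[OF GC])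
  have PC: "GC \<subseteq> Pow (space M)" using GC sets.sets_into_space by auto
  have X1m: "(\<lambda>\<omega>. c (X \<omega>)) \<in> borel_measurable M"
    using measurable_compose[OF X, of c borel] by (simp add: comp_def)
  have Zm': "Z \<in> borel_measurable M" by (rule measurable_from_subalg[OF subC Zm])
  have ind: "indep_var borel (\<lambda>\<omega>. c (X \<omega>)) borel Z"
    unfolding indep_var_eq
  proof (intro conjI)
    show "random_variable borel (\<lambda>\<omega>. c (X \<omega>))" by (rule X1m)
    show "random_variable borel Z" by (rule Zm')
    let ?A = "sigma_sets (space M) {(\<lambda>\<omega>. c (X \<omega>)) -` A \<inter> space M |A. A \<in> sets borel}"
    let ?B = "sigma_sets (space M) {Z -` A \<inter> space M |A. A \<in> sets borel}"
    have A: "?A \<subseteq> sigma_sets (space M) GA"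
    proof (rule sigma_sets_mono, safe)
      fix A :: "real set"
      show "(\<lambda>\<omega>. c (X \<omega>)) -` A \<inter> space M \<in> sigma_sets (space M) GA"
        using XA[of "c -` A"] by (simp add: vimage_def)
    qed
    have B: "?B \<subseteq> sigma_sets (space M) GC"
    proof (rule sigma_sets_mono, safe)
      fix A :: "real set" assume "A \<in> sets borel"
      then have "Z -` A \<inter> space (sigma (space M) GC) \<in> sets (sigma (space M) GC)"
        using Zm by (rule measurable_sets[rotated])
      then show "Z -` A \<inter> space M \<in> sigma_sets (space M) GC"
        using PC by (simp add: sets_measure_of)
    qed
    have GAs: "sigma_sets (space M) GA \<subseteq> events" using GA by (rule sets.sigma_sets_subset)
    have GCs: "sigma_sets (space M) GC \<subseteq> events" using GC by (rule sets.sigma_sets_subset)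
    show "indep_set ?A ?B"
      unfolding indep_sets2_eq
    proof (intro conjI ballI)
      show "?A \<subseteq> events" using A GAs by (rule order_trans)
      show "?B \<subseteq> events" using B GCs by (rule order_trans)
      fix a d assume "a \<in> ?A" "d \<in> ?B"
      then show "prob (a \<inter> d) = prob a * prob d" using A B indep by auto
    qed
  qed
  have X1i: "integrable M (\<lambda>\<omega>. c (X \<omega>))"
    by (rule integrable_const_bound[where B=C]) (use c X1m in auto)
  show "(\<integral>\<omega>. c (X \<omega>) * Z \<omega> \<partial>M) = (\<integral>\<omega>. c (X \<omega>) \<partial>M) * (\<integral>\<omega>. Z \<omega> \<partial>M)"
    by (rule indep_var_lebesgue_integral[OF ind X1i Zi])
  show "integrable M (\<lambda>\<omega>. c (X \<omega>) * Z \<omega>)"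
    by (rule indep_var_integrable[OF ind X1i Zi])
qed


lemma fav_state_cong:
  "(\<And>r. r \<in> {1..t} \<Longrightarrow> S1 r = S2 r) \<Longrightarrow> fav_state \<eta> s w0 S1 hc t = fav_state \<eta> s w0 S2 hc t"
proof (induction t)
  case 0 then show ?case by simp
next
  case (Suc t)
  have "fav_state \<eta> s w0 S1 hc t = fav_state \<eta> s w0 S2 hc t" using Suc by auto
  moreover have "S1 (Suc t) = S2 (Suc t)" using Suc by auto
  ultimately show ?case by (simp add: Let_def)
qed

lemma fav_state_meas:
  fixes hcf :: "nat \<Rightarrow> nat \<Rightarrow> 'a \<Rightarrow> 'v::euclidean_space" and Sf :: "nat \<Rightarrow> 'a \<Rightarrow> nat set"
  assumes G: "G \<subseteq> Pow \<Omega>"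
   and Smem: "\<And>r i. r \<in> {1..t} \<Longrightarrow> {\<omega>\<in>\<Omega>. i \<in> Sf r \<omega>} \<in> sigma_sets \<Omega> G"
   and hmeas: "\<And>r j. r \<in> {1..t} \<Longrightarrow> j \<in> {1..n} \<Longrightarrow> hcf r j \<in> borel_measurable (sigma \<Omega> G)"
  shows "(\<lambda>\<omega>. fst (fav_state \<eta> s w0 (\<lambda>r. Sf r \<omega> \<inter> {1..n}) (\<lambda>r j. hcf r j \<omega>) t)) \<in> borel_measurable (sigma \<Omega> G)
     \<and> (\<forall>i. (\<lambda>\<omega>. snd (fav_state \<eta> s w0 (\<lambda>r. Sf r \<omega> \<inter> {1..n}) (\<lambda>r j. hcf r j \<omega>) t) i) \<in> borel_measurable (sigma \<Omega> G))"
  using Smem hmeas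
proof (induction t)
  case 0 then show ?case by simp
next
  case (Suc t)
  define W where "W \<omega> = fst (fav_state \<eta> s w0 (\<lambda>r. Sf r \<omega> \<inter> {1..n}) (\<lambda>r j. hcf r j \<omega>) t)" for \<omega>
  define WI where "WI i \<omega> = snd (fav_state \<eta> s w0 (\<lambda>r. Sf r \<omega> \<inter> {1..n}) (\<lambda>r j. hcf r j \<omega>) t) i" for i \<omega>
  have IH: "W \<in> borel_measurable (sigma \<Omega> G)" "\<And>i. WI i \<in> borel_measurable (sigma \<Omega> G)"
    using Suc.IH Suc.prems unfolding W_def WI_def by auto
  have sp: "space (sigma \<Omega> G) = \<Omega>" by (rule space_measure_of_conv)
  have ss: "sets (sigma \<Omega> G) = sigma_sets \<Omega> G" using G by (simp add: sets_measure_of)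
  have Sm: "{\<omega> \<in> space (sigma \<Omega> G). i \<in> Sf (Suc t) \<omega>} \<in> sets (sigma \<Omega> G)" for i
    using Suc.prems(1)[of "Suc t" i] sp ss by auto
  have Sm2: "{\<omega> \<in> space (sigma \<Omega> G). i \<in> Sf (Suc t) \<omega> \<inter> {1..n}} \<in> sets (sigma \<Omega> G)" for i
  proof (cases "i \<in> {1..n}")
    case True then show ?thesis using Sm[of i] by simp
  next
    case False
    then have "{\<omega> \<in> space (sigma \<Omega> G). i \<in> Sf (Suc t) \<omega> \<inter> {1..n}} = {}" by auto
    then show ?thesis by (metis sets.empty_sets)
  qed
  have hm: "hcf (Suc t) i \<in> borel_measurable (sigma \<Omega> G)" if "i \<in> {1..n}" for i
    using Suc.prems(2)[of "Suc t" i] that by auto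
  have sumeq: "(\<Sum>i\<in>Sf (Suc t) \<omega> \<inter> {1..n}. WI i \<omega> - \<eta> *\<^sub>R hcf (Suc t) i \<omega>)
      = (\<Sum>i\<in>{1..n}. if i \<in> Sf (Suc t) \<omega> then WI i \<omega> - \<eta> *\<^sub>R hcf (Suc t) i \<omega> else 0)" for \<omega>
    by (subst Int_commute, rule sum.inter_restrict) simp
  define W' where "W' \<omega> = (1 / real (s + 1)) *\<^sub>R (W \<omega> + (\<Sum>i\<in>{1..n}. if i \<in> Sf (Suc t) \<omega> then WI i \<omega> - \<eta> *\<^sub>R hcf (Suc t) i \<omega> else 0))" for \<omega>
  have W'm: "W' \<in> borel_measurable (sigma \<Omega> G)"
    unfolding W'_def
    by (intro borel_measurable_scaleR borel_measurable_const borel_measurable_add IH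
        borel_measurable_sum measurable_If Sm borel_measurable_diff hm) auto
  have eq: "fav_state \<eta> s w0 (\<lambda>r. Sf r \<omega> \<inter> {1..n}) (\<lambda>r j. hcf r j \<omega>) (Suc t)
      = (W' \<omega>, \<lambda>i. if i \<in> Sf (Suc t) \<omega> \<inter> {1..n} then W' \<omega> else WI i \<omega>)" for \<omega>
    unfolding fav_state.simps Let_def W_def[symmetric] WI_def[symmetric] sumeq W'_def[symmetric] by simp
  show ?case unfolding eq fst_conv snd_conv
  proof (intro conjI allI)
    show "(\<lambda>\<omega>. W' \<omega>) \<in> borel_measurable (sigma \<Omega> G)" using W'm by simp
    fix i
    show "(\<lambda>\<omega>. if i \<in> Sf (Suc t) \<omega> \<inter> {1..n} then W' \<omega> else WI i \<omega>) \<in> borel_measurable (sigma \<Omega> G)"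
      by (rule measurable_If[OF W'm IH(2) Sm2])
  qed
qed

lemma hc_meas:
  fixes htil :: "nat \<Rightarrow> nat \<Rightarrow> nat \<Rightarrow> 'a \<Rightarrow> 'v::euclidean_space"
  assumes G: "G \<subseteq> Pow (space M)"
   and Em: "\<And>B. E r j -` B \<inter> space M \<in> sigma_sets (space M) G"
   and hm: "\<And>q. q \<ge> 1 \<Longrightarrow> htil r j q \<in> borel_measurable (sigma (space M) G)"
  shows "(\<lambda>\<omega>. fav_hc M stoch K E htil r j \<omega>) \<in> borel_measurable (sigma (space M) G)"
proof -
  define \<alpha>f where "\<alpha>f e = (if stoch then measure M {\<omega>'\<in>space M. E r j \<omega>' > 0} * real (min e K)
      else \<integral>\<omega>'. real (min (E r j \<omega>') K) \<partial>M)" for e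
  have eq: "fav_hc M stoch K E htil r j \<omega> = hcheck (\<alpha>f (E r j \<omega>)) K (E r j \<omega>) (\<lambda>q. htil r j q \<omega>)" for \<omega>
    by (simp add: fav_hc_def fav_alpha_def \<alpha>f_def)
  have Em': "E r j \<in> measurable (sigma (space M) G) (count_space UNIV)"
    by (rule meas_gen) (use G Em in auto)
  have "(\<lambda>\<omega>. hcheck (\<alpha>f e) K e (\<lambda>q. htil r j q \<omega>)) \<in> borel_measurable (sigma (space M) G)" for e
    unfolding hcheck_def
    by (cases "e > 0") (auto intro!: borel_measurable_sum borel_measurable_scaleR hm)
  from measurable_compose_countable[OF this Em'] show ?thesis unfolding eq .
qed



lemma integrable_nonneg_bound:
  fixes f g :: "'a \<Rightarrow> real"
  assumes "integrable M f" "g \<in> borel_measurable M" "\<And>\<omega>. 0 \<le> g \<omega>" "\<And>\<omega>. g \<omega> \<le> f \<omega>"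
  shows "integrable M g"
  by (rule Bochner_Integration.integrable_bound[OF assms(1,2)])
     (use assms(3,4) in \<open>auto intro!: AE_I2 simp: abs_le_iff order_trans[OF assms(3,4)]\<close>)

lemma sq3: "((a::real) + b + c)^2 \<le> 3 * (a^2 + b^2 + c^2)"
proof -
  have "0 \<le> (a-b)^2 + (b-c)^2 + (a-c)^2" by simp
  then show ?thesis by (simp add: power2_eq_square algebra_simps)
qed

lemma sq2: "((a::real) + b)^2 \<le> 2 * (a^2 + b^2)"
proof -
  have "0 \<le> (a-b)^2" by simp
  then show ?thesis by (simp add: power2_eq_square algebra_simps)
qed

lemma young54: "norm ((a::'v::real_normed_vector) - b)^2 \<le> 5 * norm a ^2 + 5/4 * norm b^2"
proof -
  have n: "norm (a - b) \<le> norm a + norm b" by (rule norm_triangle_ineq4)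
  have "norm (a - b)^2 \<le> (norm a + norm b)^2" by (rule power_mono[OF n norm_ge_zero])
  moreover have "0 \<le> (2 * norm a - norm b / 2)^2" by simp
  ultimately show ?thesis by (simp add: power2_eq_square algebra_simps)
qed

lemma norm_sum_sq_le:
  fixes v :: "nat \<Rightarrow> 'v::real_normed_vector"
  shows "norm (\<Sum>p\<in>A. v p)^2 \<le> real (card A) * (\<Sum>p\<in>A. norm (v p)^2)"
proof -
  have "norm (\<Sum>p\<in>A. v p) \<le> (\<Sum>p\<in>A. norm (v p))" by (rule norm_sum)
  then have "norm (\<Sum>p\<in>A. v p)^2 \<le> (\<Sum>p\<in>A. norm (v p))^2" by (rule power_mono[OF _ norm_ge_zero])
  also have "\<dots> \<le> (\<Sum>p\<in>A. norm (v p)^2) * card A" by (rule sum_squared_le_sum_of_squares)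
  finally show ?thesis by (simp add: mult.commute)
qed


lemma client_bound:
  fixes M :: "'a measure" and g w m :: "'a \<Rightarrow> 'v::euclidean_space" and ht :: "nat \<Rightarrow> 'a \<Rightarrow> 'v"
    and F :: "'v \<Rightarrow> 'v" and c :: "nat \<Rightarrow> nat \<Rightarrow> real" and X :: "'a \<Rightarrow> nat" and hcv :: "'a \<Rightarrow> 'v"
    and \<eta> L \<sigma> :: real and K :: nat
  defines "D \<equiv> \<lambda>q \<omega>. \<eta> *\<^sub>R (\<Sum>p = 1..<q. ht p \<omega>)"
  defines "\<xi> \<equiv> \<lambda>q \<omega>. ht q \<omega> - F (w \<omega> - D q \<omega>)"
  assumes M: "prob_space M" and K: "K \<ge> 1" and eta: "\<eta> > 0" and L: "L > 0"
    and \<theta>: "\<eta>^2 * real K^2 * L^2 \<le> 1/16"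
    and lipF: "\<And>x y. norm (F x - F y) \<le> L * norm (x - y)"
    and Fm: "F \<in> borel_measurable borel"
    and gm: "g \<in> borel_measurable M" and wm: "w \<in> borel_measurable M" and mm: "m \<in> borel_measurable M"
    and htm: "\<And>q. q \<in> {1..K} \<Longrightarrow> ht q \<in> borel_measurable M"
    and g2: "integrable M (\<lambda>\<omega>. norm (g \<omega>)^2)"
    and wm2: "integrable M (\<lambda>\<omega>. norm (w \<omega> - m \<omega>)^2)"
    and Fm2: "integrable M (\<lambda>\<omega>. norm (F (m \<omega>))^2)"
    and ht2: "\<And>q. q \<in> {1..K} \<Longrightarrow> integrable M (\<lambda>\<omega>. norm (ht q \<omega>)^2)"
    and \<xi>2: "\<And>q. q \<in> {1..K} \<Longrightarrow> integrable M (\<lambda>\<omega>. norm (\<xi> q \<omega>)^2)"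
    and \<xi>var: "\<And>q. q \<in> {1..K} \<Longrightarrow> (\<integral>\<omega>. norm (\<xi> q \<omega>)^2 \<partial>M) \<le> \<sigma>^2"
    and \<xi>mean: "\<And>q. q \<in> {1..K} \<Longrightarrow> (\<integral>\<omega>. g \<omega> \<bullet> \<xi> q \<omega> \<partial>M) = 0"
    and hcv: "\<And>\<omega>. hcv \<omega> = (\<Sum>q = 1..K. c q (X \<omega>) *\<^sub>R ht q \<omega>)"
    and cind: "\<And>q. q \<in> {1..K} \<Longrightarrow> integrable M (\<lambda>\<omega>. c q (X \<omega>) * (g \<omega> \<bullet> - ht q \<omega>))"
    and cfac: "\<And>q. q \<in> {1..K} \<Longrightarrow> (\<integral>\<omega>. c q (X \<omega>) * (g \<omega> \<bullet> - ht q \<omega>) \<partial>M)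
        = (\<integral>\<omega>. c q (X \<omega>) \<partial>M) * (\<integral>\<omega>. g \<omega> \<bullet> - ht q \<omega> \<partial>M)"
    and cpos: "\<And>q. q \<in> {1..K} \<Longrightarrow> 0 \<le> (\<integral>\<omega>. c q (X \<omega>) \<partial>M)"
    and csum: "(\<Sum>q = 1..K. \<integral>\<omega>. c q (X \<omega>) \<partial>M) = 1"
  shows "(\<integral>\<omega>. g \<omega> \<bullet> - hcv \<omega> \<partial>M) \<le> - (\<integral>\<omega>. g \<omega> \<bullet> F (m \<omega>) \<partial>M) + (\<integral>\<omega>. norm (g \<omega>)^2 \<partial>M) / 4
     + L^2 * (20 * (\<integral>\<omega>. norm (w \<omega> - m \<omega>)^2 \<partial>M) + 4 * \<eta>^2 * real K^2 * \<sigma>^2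
              + 16 * \<eta>^2 * real K^2 * (\<integral>\<omega>. norm (F (m \<omega>))^2 \<partial>M))"
proof -
  interpret prob_space M by (rule M)
  define A where "A = (\<integral>\<omega>. norm (w \<omega> - m \<omega>)^2 \<partial>M)"
  define B where "B = (\<integral>\<omega>. norm (F (m \<omega>))^2 \<partial>M)"
  define Gg where "Gg = (\<integral>\<omega>. norm (g \<omega>)^2 \<partial>M)"
  define d where "d q = (\<integral>\<omega>. norm (D q \<omega>)^2 \<partial>M)" for q
  have A0: "0 \<le> A" unfolding A_def by (rule integral_nonneg_AE) auto
  have B0: "0 \<le> B" unfolding B_def by (rule integral_nonneg_AE) auto
  have Fcomp: "(\<lambda>\<omega>. F (f \<omega>)) \<in> borel_measurable M" if "f \<in> borel_measurable M" for f
    using measurable_compose[OF that Fm] by (simp add: comp_def)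
  have Dm: "D q \<in> borel_measurable M" if "q \<in> {1..K}" for q
  proof -
    have "ht p \<in> borel_measurable M" if "p \<in> {1..<q}" for p using htm \<open>q \<in> {1..K}\<close> that by auto
    then show ?thesis unfolding D_def by (intro borel_measurable_scaleR borel_measurable_const borel_measurable_sum) auto
  qed
  have \<xi>m: "\<xi> q \<in> borel_measurable M" if "q \<in> {1..K}" for q
    unfolding \<xi>_def using htm[OF that] Dm[OF that] wm Fcomp by (intro borel_measurable_diff) auto
  have normD: "norm (D q \<omega>)^2 \<le> \<eta>^2 * real (K - 1) * (\<Sum>p = 1..<q. norm (ht p \<omega>)^2)" if "q \<in> {1..K}" for q \<omega>
  proof -
    have "norm (D q \<omega>)^2 = \<eta>^2 * norm (\<Sum>p = 1..<q. ht p \<omega>)^2"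
      unfolding D_def by (simp add: power_mult_distrib)
    also have "\<dots> \<le> \<eta>^2 * (real (card {1..<q}) * (\<Sum>p = 1..<q. norm (ht p \<omega>)^2))"
      by (rule mult_left_mono[OF norm_sum_sq_le]) simp
    also have "\<dots> \<le> \<eta>^2 * (real (K - 1) * (\<Sum>p = 1..<q. norm (ht p \<omega>)^2))"
      using that by (intro mult_left_mono mult_right_mono sum_nonneg) auto
    finally show ?thesis by (simp add: mult.assoc)
  qed
  have D2: "integrable M (\<lambda>\<omega>. norm (D q \<omega>)^2)" if q: "q \<in> {1..K}" for q
  proof (rule integrable_nonneg_bound)
    show "integrable M (\<lambda>\<omega>. \<eta>^2 * real (K - 1) * (\<Sum>p = 1..<q. norm (ht p \<omega>)^2))"
      using ht2 q by (intro integrable_mult_right Bochner_Integration.integrable_sum) auto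
    show "(\<lambda>\<omega>. norm (D q \<omega>)^2) \<in> borel_measurable M" using Dm[OF q] by measurable
  qed (use normD q in auto)
  have Fx: "F (w \<omega> - D q \<omega>) = ht q \<omega> - \<xi> q \<omega>" for q \<omega> unfolding \<xi>_def by simp
  have tri2: "norm (a - b)^2 \<le> 2 * norm a^2 + 2 * norm b^2" for a b :: 'v
  proof -
    have "norm (a - b)^2 \<le> (norm a + norm b)^2" by (rule power_mono[OF norm_triangle_ineq4 norm_ge_zero])
    also have "\<dots> \<le> 2 * (norm a^2 + norm b^2)" by (rule sq2)
    finally show ?thesis by simp
  qed
  have Fx2: "integrable M (\<lambda>\<omega>. norm (F (w \<omega> - D q \<omega>))^2)" if q: "q \<in> {1..K}" for q
  proof (rule integrable_nonneg_bound)
    show "integrable M (\<lambda>\<omega>. 2 * norm (ht q \<omega>)^2 + 2 * norm (\<xi> q \<omega>)^2)"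
      using ht2[OF q] \<xi>2[OF q] by auto
    show "(\<lambda>\<omega>. norm (F (w \<omega> - D q \<omega>))^2) \<in> borel_measurable M"
      using Fcomp[of "\<lambda>\<omega>. w \<omega> - D q \<omega>"] wm Dm[OF q] by measurable
  qed (use tri2 in \<open>auto simp: Fx\<close>)
  have x2: "integrable M (\<lambda>\<omega>. norm (w \<omega> - D q \<omega> - m \<omega>)^2)" if q: "q \<in> {1..K}" for q
  proof (rule integrable_nonneg_bound)
    show "integrable M (\<lambda>\<omega>. 5 * norm (w \<omega> - m \<omega>)^2 + 5/4 * norm (D q \<omega>)^2)"
      using wm2 D2[OF q] by auto
    show "(\<lambda>\<omega>. norm (w \<omega> - D q \<omega> - m \<omega>)^2) \<in> borel_measurable M"
      using wm mm Dm[OF q] by measurable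
    fix \<omega>
    show "norm (w \<omega> - D q \<omega> - m \<omega>)^2 \<le> 5 * norm (w \<omega> - m \<omega>)^2 + 5/4 * norm (D q \<omega>)^2"
      using young54[of "w \<omega> - m \<omega>" "D q \<omega>"] by (simp add: algebra_simps)
  qed simp
  have htp: "norm (ht p \<omega>)^2 \<le> 6 * norm (F (m \<omega>))^2 + 6 * L^2 * norm (w \<omega> - m \<omega>)^2
        + 6 * L^2 * norm (D p \<omega>)^2 + 2 * norm (\<xi> p \<omega>)^2" for p \<omega>
  proof -
    have e: "ht p \<omega> = F (w \<omega> - D p \<omega>) - - \<xi> p \<omega>" by (simp add: Fx)
    have "norm (F (w \<omega> - D p \<omega>)) \<le> norm (F (m \<omega>)) + norm (F (w \<omega> - D p \<omega>) - F (m \<omega>))"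
      by (rule norm_triangle_sub)
    also have "norm (F (w \<omega> - D p \<omega>) - F (m \<omega>)) \<le> L * norm ((w \<omega> - m \<omega>) - D p \<omega>)"
      using lipF[of "w \<omega> - D p \<omega>" "m \<omega>"] by (simp add: algebra_simps)
    also have "\<dots> \<le> L * (norm (w \<omega> - m \<omega>) + norm (D p \<omega>))"
      using L by (intro mult_left_mono norm_triangle_ineq4) auto
    finally have n1: "norm (F (w \<omega> - D p \<omega>)) \<le> norm (F (m \<omega>)) + L * norm (w \<omega> - m \<omega>) + L * norm (D p \<omega>)"
      by (simp add: algebra_simps)
    have "norm (F (w \<omega> - D p \<omega>))^2 \<le> (norm (F (m \<omega>)) + L * norm (w \<omega> - m \<omega>) + L * norm (D p \<omega>))^2"
      by (rule power_mono[OF n1 norm_ge_zero])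
    also have "\<dots> \<le> 3 * (norm (F (m \<omega>))^2 + (L * norm (w \<omega> - m \<omega>))^2 + (L * norm (D p \<omega>))^2)"
      by (rule sq3)
    finally have n2: "norm (F (w \<omega> - D p \<omega>))^2 \<le> 3 * (norm (F (m \<omega>))^2 + L^2 * norm (w \<omega> - m \<omega>)^2 + L^2 * norm (D p \<omega>)^2)"
      by (simp add: power_mult_distrib)
    have "norm (ht p \<omega>)^2 \<le> 2 * norm (F (w \<omega> - D p \<omega>))^2 + 2 * norm (- \<xi> p \<omega>)^2"
      unfolding e by (rule tri2)
    then show ?thesis using n2 by simp
  qed
  have dstep: "d q \<le> \<eta>^2 * real (K - 1) * (\<Sum>p = 1..<q. 6 * B + 6 * L^2 * A + 6 * L^2 * d p + 2 * \<sigma>^2)"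
    if q: "q \<in> {1..K}" for q
  proof -
    have pK: "p \<in> {1..K}" if "p \<in> {1..<q}" for p using q that by auto
    have int_rhs: "integrable M (\<lambda>\<omega>. \<eta>^2 * real (K - 1) * (\<Sum>p = 1..<q. 6 * norm (F (m \<omega>))^2 + 6 * L^2 * norm (w \<omega> - m \<omega>)^2
        + 6 * L^2 * norm (D p \<omega>)^2 + 2 * norm (\<xi> p \<omega>)^2))"
      using Fm2 wm2 D2 \<xi>2 pK by (intro integrable_mult_right Bochner_Integration.integrable_sum) auto
    have "d q \<le> (\<integral>\<omega>. \<eta>^2 * real (K - 1) * (\<Sum>p = 1..<q. 6 * norm (F (m \<omega>))^2 + 6 * L^2 * norm (w \<omega> - m \<omega>)^2
        + 6 * L^2 * norm (D p \<omega>)^2 + 2 * norm (\<xi> p \<omega>)^2) \<partial>M)"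
      unfolding d_def
    proof (rule integral_mono[OF D2[OF q] int_rhs])
      fix \<omega>
      have "norm (D q \<omega>)^2 \<le> \<eta>^2 * real (K - 1) * (\<Sum>p = 1..<q. norm (ht p \<omega>)^2)" by (rule normD[OF q])
      also have "\<dots> \<le> \<eta>^2 * real (K - 1) * (\<Sum>p = 1..<q. 6 * norm (F (m \<omega>))^2 + 6 * L^2 * norm (w \<omega> - m \<omega>)^2
        + 6 * L^2 * norm (D p \<omega>)^2 + 2 * norm (\<xi> p \<omega>)^2)"
        by (intro mult_left_mono sum_mono htp) auto
      finally show "norm (D q \<omega>)^2 \<le> \<eta>^2 * real (K - 1) * (\<Sum>p = 1..<q. 6 * norm (F (m \<omega>))^2 + 6 * L^2 * norm (w \<omega> - m \<omega>)^2
        + 6 * L^2 * norm (D p \<omega>)^2 + 2 * norm (\<xi> p \<omega>)^2)" .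
    qed
    also have "\<dots> = \<eta>^2 * real (K - 1) * (\<Sum>p = 1..<q. 6 * B + 6 * L^2 * A + 6 * L^2 * d p + 2 * (\<integral>\<omega>. norm (\<xi> p \<omega>)^2 \<partial>M))"
    proof -
      have "(\<integral>\<omega>. (\<Sum>p = 1..<q. 6 * norm (F (m \<omega>))^2 + 6 * L^2 * norm (w \<omega> - m \<omega>)^2
        + 6 * L^2 * norm (D p \<omega>)^2 + 2 * norm (\<xi> p \<omega>)^2) \<partial>M)
        = (\<Sum>p = 1..<q. \<integral>\<omega>. 6 * norm (F (m \<omega>))^2 + 6 * L^2 * norm (w \<omega> - m \<omega>)^2
        + 6 * L^2 * norm (D p \<omega>)^2 + 2 * norm (\<xi> p \<omega>)^2 \<partial>M)"
        using Fm2 wm2 D2 \<xi>2 pK by (intro Bochner_Integration.integral_sum) auto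
      also have "\<dots> = (\<Sum>p = 1..<q. 6 * B + 6 * L^2 * A + 6 * L^2 * d p + 2 * (\<integral>\<omega>. norm (\<xi> p \<omega>)^2 \<partial>M))"
        using Fm2 wm2 D2 \<xi>2 pK by (intro sum.cong refl) (simp add: A_def B_def d_def)
      finally show ?thesis by simp
    qed
    also have "\<dots> \<le> \<eta>^2 * real (K - 1) * (\<Sum>p = 1..<q. 6 * B + 6 * L^2 * A + 6 * L^2 * d p + 2 * \<sigma>^2)"
      using \<xi>var pK by (intro mult_left_mono sum_mono) auto
    finally show ?thesis .
  qed
  define Mb where "Mb = 16/5 * (\<eta>^2 * real K^2) * \<sigma>^2 + 48/5 * (\<eta>^2 * real K^2) * B + 3/5 * A"
  have e0: "0 \<le> \<eta>^2 * real K^2" by simp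
  have Mb0: "0 \<le> Mb" unfolding Mb_def using A0 B0 e0 by (intro add_nonneg_nonneg mult_nonneg_nonneg) auto
  have dbound: "q \<in> {1..K} \<longrightarrow> d q \<le> Mb" for q
  proof (induction q rule: less_induct)
    case (less q)
    show ?case
    proof
      assume q: "q \<in> {1..K}"
      have ih: "d p \<le> Mb" if "p \<in> {1..<q}" for p using less q that by auto
      define C where "C = 6 * B + 6 * L^2 * A + 6 * L^2 * Mb + 2 * \<sigma>^2"
      have C0: "0 \<le> C" unfolding C_def using A0 B0 Mb0 by (intro add_nonneg_nonneg mult_nonneg_nonneg) auto
      have "(\<Sum>p = 1..<q. 6 * B + 6 * L^2 * A + 6 * L^2 * d p + 2 * \<sigma>^2) \<le> (\<Sum>p = 1..<q. C)"
        unfolding C_def using ih by (intro sum_mono) (auto intro!: mult_left_mono)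
      also have "\<dots> = real (q - 1) * C" by simp
      finally have s1: "(\<Sum>p = 1..<q. 6 * B + 6 * L^2 * A + 6 * L^2 * d p + 2 * \<sigma>^2) \<le> real (q - 1) * C" .
      have kq: "real (K - 1) * real (q - 1) \<le> real K^2"
      proof -
        have "(K - 1) * (q - 1) \<le> K * K" using q by (intro mult_mono) auto
        then have "real ((K - 1) * (q - 1)) \<le> real (K * K)" by linarith
        then show ?thesis by (simp add: power2_eq_square)
      qed
      have "d q \<le> \<eta>^2 * real (K - 1) * (real (q - 1) * C)"
        using dstep[OF q] s1 by (smt (verit) mult_left_mono e0 zero_le_power2 of_nat_0_le_iff mult_nonneg_nonneg)
      also have "\<dots> = \<eta>^2 * (real (K - 1) * real (q - 1)) * C" by (simp add: algebra_simps)
      also have "\<dots> \<le> \<eta>^2 * real K^2 * C"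
        using kq C0 by (intro mult_right_mono mult_left_mono) auto
      also have "\<dots> = 6 * (\<eta>^2 * real K^2) * B + 6 * (\<eta>^2 * real K^2 * L^2) * A + 6 * (\<eta>^2 * real K^2 * L^2) * Mb
          + 2 * (\<eta>^2 * real K^2) * \<sigma>^2"
        unfolding C_def by (simp add: algebra_simps)
      also have "\<dots> \<le> Mb"
      proof -
        have "(\<eta>^2 * real K^2 * L^2) * A \<le> 1/16 * A" using \<theta> A0 by (rule mult_right_mono)
        moreover have "(\<eta>^2 * real K^2 * L^2) * Mb \<le> 1/16 * Mb" using \<theta> Mb0 by (rule mult_right_mono)
        ultimately show ?thesis using Mb_def by linarith
      qed
      finally show "d q \<le> Mb" .
    qed
  qed
  have xbound: "(\<integral>\<omega>. norm (w \<omega> - D q \<omega> - m \<omega>)^2 \<partial>M) \<le> 20 * A + 4 * \<eta>^2 * real K^2 * \<sigma>^2 + 16 * \<eta>^2 * real K^2 * B"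
    if q: "q \<in> {1..K}" for q
  proof -
    have "(\<integral>\<omega>. norm (w \<omega> - D q \<omega> - m \<omega>)^2 \<partial>M) \<le> (\<integral>\<omega>. 5 * norm (w \<omega> - m \<omega>)^2 + 5/4 * norm (D q \<omega>)^2 \<partial>M)"
    proof (rule integral_mono[OF x2[OF q]])
      show "integrable M (\<lambda>\<omega>. 5 * norm (w \<omega> - m \<omega>)^2 + 5/4 * norm (D q \<omega>)^2)" using wm2 D2[OF q] by auto
      fix \<omega>
      show "norm (w \<omega> - D q \<omega> - m \<omega>)^2 \<le> 5 * norm (w \<omega> - m \<omega>)^2 + 5/4 * norm (D q \<omega>)^2"
        using young54[of "w \<omega> - m \<omega>" "D q \<omega>"] by (simp add: algebra_simps)
    qed
    also have "\<dots> = 5 * A + 5/4 * d q" using wm2 D2[OF q] by (simp add: A_def d_def)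
    also have "\<dots> \<le> 5 * A + 5/4 * Mb" using dbound[of q] q by auto
    also have "\<dots> \<le> 20 * A + 4 * \<eta>^2 * real K^2 * \<sigma>^2 + 16 * \<eta>^2 * real K^2 * B"
    proof -
      have "0 \<le> (\<eta>^2 * real K^2) * B" using e0 B0 by simp
      then show ?thesis unfolding Mb_def using A0 by (simp add: algebra_simps)
    qed
    finally show ?thesis .
  qed
  define Zb where "Zb = - (\<integral>\<omega>. g \<omega> \<bullet> F (m \<omega>) \<partial>M) + Gg / 4
     + L^2 * (20 * A + 4 * \<eta>^2 * real K^2 * \<sigma>^2 + 16 * \<eta>^2 * real K^2 * B)"
  have gFm: "integrable M (\<lambda>\<omega>. g \<omega> \<bullet> F (m \<omega>))"
    by (rule integrable_inner_sq[OF gm Fcomp[OF mm] g2 Fm2])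
  have qbound: "(\<integral>\<omega>. g \<omega> \<bullet> - ht q \<omega> \<partial>M) \<le> Zb" if q: "q \<in> {1..K}" for q
  proof -
    have xm: "(\<lambda>\<omega>. F (w \<omega> - D q \<omega>)) \<in> borel_measurable M" using Fcomp[of "\<lambda>\<omega>. w \<omega> - D q \<omega>"] wm Dm[OF q] by measurable
    have i1: "integrable M (\<lambda>\<omega>. g \<omega> \<bullet> F (w \<omega> - D q \<omega>))"
      by (rule integrable_inner_sq[OF gm xm g2 Fx2[OF q]])
    have i2: "integrable M (\<lambda>\<omega>. g \<omega> \<bullet> \<xi> q \<omega>)"
      by (rule integrable_inner_sq[OF gm \<xi>m[OF q] g2 \<xi>2[OF q]])
    have "(\<integral>\<omega>. g \<omega> \<bullet> - ht q \<omega> \<partial>M) = (\<integral>\<omega>. - (g \<omega> \<bullet> F (w \<omega> - D q \<omega>)) - g \<omega> \<bullet> \<xi> q \<omega> \<partial>M)"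
      by (rule Bochner_Integration.integral_cong) (auto simp: \<xi>_def inner_diff_right)
    also have "\<dots> = - (\<integral>\<omega>. g \<omega> \<bullet> F (w \<omega> - D q \<omega>) \<partial>M) - (\<integral>\<omega>. g \<omega> \<bullet> \<xi> q \<omega> \<partial>M)"
      using i1 i2 by simp
    also have "\<dots> = - (\<integral>\<omega>. g \<omega> \<bullet> F (w \<omega> - D q \<omega>) \<partial>M)" using \<xi>mean[OF q] by simp
    also have "\<dots> = (\<integral>\<omega>. - (g \<omega> \<bullet> F (w \<omega> - D q \<omega>)) \<partial>M)" by simp
    also have "\<dots> \<le> (\<integral>\<omega>. - (g \<omega> \<bullet> F (m \<omega>)) + norm (g \<omega>)^2 / 4 + L^2 * norm (w \<omega> - D q \<omega> - m \<omega>)^2 \<partial>M)"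
    proof (rule integral_mono)
      show "integrable M (\<lambda>\<omega>. - (g \<omega> \<bullet> F (w \<omega> - D q \<omega>)))" using i1 by simp
      show "integrable M (\<lambda>\<omega>. - (g \<omega> \<bullet> F (m \<omega>)) + norm (g \<omega>)^2 / 4 + L^2 * norm (w \<omega> - D q \<omega> - m \<omega>)^2)"
        using gFm g2 x2[OF q] by auto
      fix \<omega>
      let ?a = "norm (g \<omega>)" and ?b = "norm (w \<omega> - D q \<omega> - m \<omega>)"
      have "g \<omega> \<bullet> (F (m \<omega>) - F (w \<omega> - D q \<omega>)) \<le> ?a * norm (F (m \<omega>) - F (w \<omega> - D q \<omega>))"
        by (rule order_trans[OF _ Cauchy_Schwarz_ineq2]) simp
      also have "\<dots> \<le> ?a * (L * ?b)"
        using lipF[of "m \<omega>" "w \<omega> - D q \<omega>"] by (intro mult_left_mono) (auto simp: norm_minus_commute)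
      also have "\<dots> \<le> ?a^2 / 4 + L^2 * ?b^2"
      proof -
        have "0 \<le> (?a / 2 - L * ?b)^2" by simp
        then show ?thesis by (simp add: power2_eq_square algebra_simps)
      qed
      finally show "- (g \<omega> \<bullet> F (w \<omega> - D q \<omega>)) \<le> - (g \<omega> \<bullet> F (m \<omega>)) + ?a^2 / 4 + L^2 * ?b^2"
        by (simp add: inner_diff_right)
    qed
    also have "\<dots> = - (\<integral>\<omega>. g \<omega> \<bullet> F (m \<omega>) \<partial>M) + Gg / 4 + L^2 * (\<integral>\<omega>. norm (w \<omega> - D q \<omega> - m \<omega>)^2 \<partial>M)"
      using gFm g2 x2[OF q] by (simp add: Gg_def)
    also have "\<dots> \<le> Zb"
      unfolding Zb_def using xbound[OF q] by (intro add_left_mono mult_left_mono) auto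
    finally show ?thesis .
  qed
  have "(\<integral>\<omega>. g \<omega> \<bullet> - hcv \<omega> \<partial>M) = (\<integral>\<omega>. (\<Sum>q = 1..K. c q (X \<omega>) * (g \<omega> \<bullet> - ht q \<omega>)) \<partial>M)"
    by (rule Bochner_Integration.integral_cong) (auto simp: hcv inner_sum_right sum_negf[symmetric])
  also have "\<dots> = (\<Sum>q = 1..K. \<integral>\<omega>. c q (X \<omega>) * (g \<omega> \<bullet> - ht q \<omega>) \<partial>M)"
    using cind by (intro Bochner_Integration.integral_sum) auto
  also have "\<dots> = (\<Sum>q = 1..K. (\<integral>\<omega>. c q (X \<omega>) \<partial>M) * (\<integral>\<omega>. g \<omega> \<bullet> - ht q \<omega> \<partial>M))"
    using cfac by (intro sum.cong) auto
  also have "\<dots> \<le> (\<Sum>q = 1..K. (\<integral>\<omega>. c q (X \<omega>) \<partial>M) * Zb)"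
    using cpos qbound by (intro sum_mono mult_left_mono) auto
  also have "\<dots> = Zb" using csum by (simp add: sum_distrib_right[symmetric])
  finally show ?thesis unfolding Zb_def A_def B_def Gg_def .
qed



lemma gen_sub: "X \<in> measurable M N \<Longrightarrow> gen_events M N X \<subseteq> sets M"
  unfolding gen_events_def by (auto intro: measurable_sets)

lemma gen_meas:
  assumes "gen_events M N X \<subseteq> G" "G \<subseteq> Pow (space M)" "X \<in> space M \<rightarrow> space N"
  shows "X \<in> measurable (sigma (space M) G) N"
  by (rule meas_gen) (use assms in \<open>auto simp: gen_events_def\<close>)

lemma S_ae:
  fixes S :: "'a \<Rightarrow> nat set"
  assumes M: "prob_space M" and Sm: "S \<in> measurable M (count_space UNIV)" and s: "s \<le> n"
    and unif: "\<And>A. A \<subseteq> {1..n} \<Longrightarrow> card A = s \<Longrightarrow> measure M {\<omega>\<in>space M. S \<omega> = A} = 1 / real (n choose s)"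
  shows "AE \<omega> in M. S \<omega> \<subseteq> {1..n}"
proof -
  interpret prob_space M by (rule M)
  define SS where "SS = {A. A \<subseteq> {1..n} \<and> card A = s}"
  have fin: "finite SS" unfolding SS_def by (rule finite_subset[of _ "Pow {1..n}"]) auto
  have card: "card SS = n choose s" unfolding SS_def using n_subsets[of "{1..n}" s] by simp
  have ev: "{\<omega>\<in>space M. S \<omega> = A} \<in> events" for A
  proof -
    have "S -` {A} \<inter> space M \<in> events" using Sm by (rule measurable_sets) simp
    moreover have "S -` {A} \<inter> space M = {\<omega>\<in>space M. S \<omega> = A}" by auto
    ultimately show ?thesis by simp
  qed
  have "prob (\<Union>A\<in>SS. {\<omega>\<in>space M. S \<omega> = A}) = (\<Sum>A\<in>SS. prob {\<omega>\<in>space M. S \<omega> = A})"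
    by (rule finite_measure_finite_Union) (use fin ev in \<open>auto simp: disjoint_family_on_def\<close>)
  also have "\<dots> = (\<Sum>A\<in>SS. 1 / real (n choose s))"
    by (rule sum.cong) (auto simp: SS_def unif)
  also have "\<dots> = 1" using card s by (simp add: zero_less_binomial_iff)
  finally have p1: "prob (\<Union>A\<in>SS. {\<omega>\<in>space M. S \<omega> = A}) = 1" .
  have sub: "(\<Union>A\<in>SS. {\<omega>\<in>space M. S \<omega> = A}) \<subseteq> {\<omega>\<in>space M. S \<omega> \<subseteq> {1..n}}"
    unfolding SS_def by auto
  have ev2: "{\<omega>\<in>space M. S \<omega> \<subseteq> {1..n}} \<in> events"
  proof -
    have "S -` {A. A \<subseteq> {1..n}} \<inter> space M \<in> events" using Sm by (rule measurable_sets) simp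
    moreover have "S -` {A. A \<subseteq> {1..n}} \<inter> space M = {\<omega>\<in>space M. S \<omega> \<subseteq> {1..n}}" by auto
    ultimately show ?thesis by simp
  qed
  have "1 \<le> prob {\<omega>\<in>space M. S \<omega> \<subseteq> {1..n}}"
    using finite_measure_mono[OF sub ev2] p1 by simp
  then have "prob {\<omega>\<in>space M. S \<omega> \<subseteq> {1..n}} = 1" using prob_le_1 by (metis antisym)
  then have "AE \<omega> in M. \<omega> \<in> {\<omega>\<in>space M. S \<omega> \<subseteq> {1..n}}" by (rule AE_prob_1)
  then show ?thesis by auto
qed

lemma grad_avg:
  fixes f :: "nat \<Rightarrow> 'v::euclidean_space \<Rightarrow> real"
  assumes d1: "\<And>i x. i \<in> {1..n} \<Longrightarrow> (f i has_derivative (\<lambda>h. gf i x \<bullet> h)) (at x)"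
   and d2: "\<And>x. ((\<lambda>y. (\<Sum>i = 1..n. f i y) / real n) has_derivative (\<lambda>h. gF x \<bullet> h)) (at x)"
  shows "gF x = (1 / real n) *\<^sub>R (\<Sum>i = 1..n. gf i x)"
proof -
  define v where "v = (1 / real n) *\<^sub>R (\<Sum>i = 1..n. gf i x)"
  have "((\<lambda>y. \<Sum>i = 1..n. f i y) has_derivative (\<lambda>h. \<Sum>i = 1..n. gf i x \<bullet> h)) (at x)"
    by (rule has_derivative_sum) (use d1 in auto)
  then have "((\<lambda>y. (1 / real n) * (\<Sum>i = 1..n. f i y)) has_derivative (\<lambda>h. (1/real n) * (\<Sum>i = 1..n. gf i x \<bullet> h))) (at x)"
    by (rule has_derivative_mult_right)
  moreover have "(\<lambda>y. (1 / real n) * (\<Sum>i = 1..n. f i y)) = (\<lambda>y. (\<Sum>i = 1..n. f i y) / real n)" by auto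
  moreover have "(\<lambda>h. (1/real n) * (\<Sum>i = 1..n. gf i x \<bullet> h)) = (\<lambda>h. v \<bullet> h)"
    by (auto simp: v_def inner_sum_left)
  ultimately have d: "((\<lambda>y. (\<Sum>i = 1..n. f i y) / real n) has_derivative (\<lambda>h. v \<bullet> h)) (at x)" by simp
  have "(\<lambda>h. gF x \<bullet> h) = (\<lambda>h. v \<bullet> h)" by (rule has_derivative_unique[OF d2 d])
  then have "gF x \<bullet> (gF x - v) = v \<bullet> (gF x - v)" by metis
  then have "(gF x - v) \<bullet> (gF x - v) = 0" by (simp add: inner_diff_left)
  then show ?thesis unfolding v_def by simp
qed


lemma past_gen_S: "r \<in> {1..t} \<Longrightarrow> gen_events M (count_space UNIV) (S r) \<subseteq> past_gen M n S E htil t"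
  unfolding past_gen_def by blast

lemma past_gen_E: "r \<in> {1..t} \<Longrightarrow> j \<in> {1..n} \<Longrightarrow> gen_events M (count_space UNIV) (E r j) \<subseteq> past_gen M n S E htil t"
  unfolding past_gen_def by blast

lemma past_gen_h: "r \<in> {1..t} \<Longrightarrow> j \<in> {1..n} \<Longrightarrow> q \<ge> 1 \<Longrightarrow> gen_events M borel (htil r j q) \<subseteq> past_gen M n S E htil t"
  unfolding past_gen_def by fastforce



theorem mainTheorem9:
  fixes M :: "'a measure"
    and n s K :: nat and \<eta> L \<sigma> G B :: real and stoch :: bool
    and w0 :: "'v::euclidean_space"
    and f :: "nat \<Rightarrow> 'v \<Rightarrow> real" and gf :: "nat \<Rightarrow> 'v \<Rightarrow> 'v" and gF :: "'v \<Rightarrow> 'v"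
    and S :: "nat \<Rightarrow> 'a \<Rightarrow> nat set" and E :: "nat \<Rightarrow> nat \<Rightarrow> 'a \<Rightarrow> nat"
    and htil :: "nat \<Rightarrow> nat \<Rightarrow> nat \<Rightarrow> 'a \<Rightarrow> 'v"
    and t :: nat
  defines "hc \<equiv> fav_hc M stoch K E htil"
    and "xq \<equiv> fav_query M stoch K \<eta> s w0 S E htil"
    and "\<mu> \<equiv> fav_mu M stoch K \<eta> n s w0 S E htil"
    and "\<Phi> \<equiv> fav_Phi M stoch K \<eta> n s w0 S E htil"
  assumes M: "prob_space M"
    and n: "n \<ge> 1" and s: "1 \<le> s" "s \<le> n" and K: "K \<ge> 1" and eta: "\<eta> > 0"
    (* gradients, f = (1/n) sum f_i *)
    and grad_i: "\<And>i x. i \<in> {1..n} \<Longrightarrow> (f i has_derivative (\<lambda>h. gf i x \<bullet> h)) (at x)"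
    and grad_f: "\<And>x. ((\<lambda>y. (\<Sum>i = 1..n. f i y) / real n) has_derivative (\<lambda>h. gF x \<bullet> h)) (at x)"
    (* smoothness *)
    and L: "L > 0"
    and lip: "\<And>i x y. i \<in> {1..n} \<Longrightarrow> norm (gf i x - gf i y) \<le> L * norm (x - y)"
    (* bounded gradient dissimilarity *)
    and B: "B^2 \<ge> 1"
    and dissim: "\<And>x. (\<Sum>i = 1..n. norm (gf i x)^2) / real n \<le> G^2 + B^2 * norm (gF x)^2"
    (* step size *)
    and eta1: "\<eta> < 1 / (4 * L * real K^2)" and eta2: "\<eta> < 1 / (2 * L * real K)"
    (* random variables *)
    and htil_meas: "\<And>r i q. r \<ge> 1 \<Longrightarrow> i \<in> {1..n} \<Longrightarrow> q \<ge> 1 \<Longrightarrow> htil r i q \<in> borel_measurable M"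
    and E_meas: "\<And>r i. r \<ge> 1 \<Longrightarrow> i \<in> {1..n} \<Longrightarrow> E r i \<in> measurable M (count_space UNIV)"
    and S_meas: "\<And>r. r \<ge> 1 \<Longrightarrow> S r \<in> measurable M (count_space UNIV)"
    (* unbiased oracle with bounded variance, conditionally on everything before the query *)
    and noise_int: "\<And>r i q. r \<ge> 1 \<Longrightarrow> i \<in> {1..n} \<Longrightarrow> q \<ge> 1 \<Longrightarrow>
        integrable M (\<lambda>\<omega>. htil r i q \<omega> - gf i (xq r i q \<omega>))"
    and noise_mean: "\<And>r i q A. r \<ge> 1 \<Longrightarrow> i \<in> {1..n} \<Longrightarrow> q \<ge> 1 \<Longrightarrow>
        A \<in> query_sa M n S E htil r i q \<Longrightarrow>
        set_lebesgue_integral M A (\<lambda>\<omega>. htil r i q \<omega> - gf i (xq r i q \<omega>)) = 0"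
    and noise_var: "\<And>r i q A. r \<ge> 1 \<Longrightarrow> i \<in> {1..n} \<Longrightarrow> q \<ge> 1 \<Longrightarrow>
        A \<in> query_sa M n S E htil r i q \<Longrightarrow>
        (\<integral>\<^sup>+\<omega>. indicator A \<omega> * ennreal (norm (htil r i q \<omega> - gf i (xq r i q \<omega>))^2) \<partial>M)
          \<le> ennreal (\<sigma>^2) * emeasure M A"
    (* local step counts *)
    and E_pos: "\<And>r i. r \<ge> 1 \<Longrightarrow> i \<in> {1..n} \<Longrightarrow> measure M {\<omega> \<in> space M. E r i \<omega> > 0} > 0"
    (* uniform client sampling *)
    and S_unif: "\<And>r A. r \<ge> 1 \<Longrightarrow> A \<subseteq> {1..n} \<Longrightarrow> card A = s \<Longrightarrow>
        measure M {\<omega> \<in> space M. S r \<omega> = A} = 1 / real (n choose s)"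
    (* (S_r, E_r) independent of the past and of all htil_{r,q}; S_r independent of E_r *)
    and indep_new: "\<And>r A C. r \<ge> 1 \<Longrightarrow>
        A \<in> sigma_sets (space M) (gen_events M (count_space UNIV) (S r)
               \<union> (\<Union>j\<in>{1..n}. gen_events M (count_space UNIV) (E r j))) \<Longrightarrow>
        C \<in> other_sa M n S E htil r \<Longrightarrow>
        measure M (A \<inter> C) = measure M A * measure M C"
    and indep_SE: "\<And>r A C. r \<ge> 1 \<Longrightarrow>
        A \<in> sigma_sets (space M) (gen_events M (count_space UNIV) (S r)) \<Longrightarrow>
        C \<in> sigma_sets (space M) (\<Union>j\<in>{1..n}. gen_events M (count_space UNIV) (E r j)) \<Longrightarrow>
        measure M (A \<inter> C) = measure M A * measure M C"
    (* all expectations appearing are finite *)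
    and int_htil: "\<And>r i q. r \<ge> 1 \<Longrightarrow> i \<in> {1..n} \<Longrightarrow> q \<ge> 1 \<Longrightarrow>
        integrable M (\<lambda>\<omega>. norm (htil r i q \<omega>)^2)"
    and int_Phi: "\<And>r. integrable M (\<Phi> r)"
    and int_grad: "\<And>r. integrable M (\<lambda>\<omega>. norm (gF (\<mu> r \<omega>))^2)"
    and int_inner: "\<And>r i. i \<in> {1..n} \<Longrightarrow> integrable M (\<lambda>\<omega>. gF (\<mu> r \<omega>) \<bullet> (- hc (r + 1) i \<omega>))"
  shows "(\<Sum>i = 1..n. \<integral>\<omega>. gF (\<mu> t \<omega>) \<bullet> (- hc (t + 1) i \<omega>) \<partial>M)
    \<le> 20 * L^2 * (\<integral>\<omega>. \<Phi> t \<omega> \<partial>M)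
       + 4 * real n * L^2 * \<eta>^2 * real K^2 * (\<sigma>^2 + 4 * G^2)
       + real n * (16 * L^2 * \<eta>^2 * real K^2 * B^2 - 3 / 4) * (\<integral>\<omega>. norm (gF (\<mu> t \<omega>))^2 \<partial>M)"
proof -
  interpret P: prob_space M by (rule M)
  have Lnn: "0 \<le> L" using L by simp
  have n0: "0 < real n" using n by simp
  have gF_eq: "gF x = (1 / real n) *\<^sub>R (\<Sum>i = 1..n. gf i x)" for x
    by (rule grad_avg[OF grad_i grad_f]) auto
  have gfm: "gf i \<in> borel_measurable borel" if "i \<in> {1..n}" for i
  proof -
    have "L-lipschitz_on UNIV (gf i)" by (rule lipschitz_onI) (use lip[OF that] L in \<open>auto simp: dist_norm\<close>)
    then have "continuous_on UNIV (gf i)" by (rule lipschitz_on_continuous_on)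
    then show ?thesis by (rule borel_measurable_continuous_onI)
  qed
  have gFm: "gF \<in> borel_measurable borel"
  proof -
    have "(\<lambda>x. (1 / real n) *\<^sub>R (\<Sum>i = 1..n. gf i x)) \<in> borel_measurable borel"
      using gfm by (intro borel_measurable_scaleR borel_measurable_const borel_measurable_sum) auto
    moreover have "gF = (\<lambda>x. (1 / real n) *\<^sub>R (\<Sum>i = 1..n. gf i x))" using gF_eq by auto
    ultimately show ?thesis by simp
  qed
  have \<theta>: "\<eta>^2 * real K^2 * L^2 \<le> 1/16"
  proof -
    have K1: "1 \<le> real K" using K by simp
    have p: "0 < 4 * L * real K^2" using L K1 by simp
    have "\<eta> * (4 * L * real K^2) < 1" using eta1 pos_less_divide_eq[OF p] by simp
    then have a: "\<eta> * L * real K^2 < 1/4" by (simp add: algebra_simps)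
    have "real K \<le> real K^2" using K1 by (simp add: power2_eq_square)
    then have "\<eta> * L * real K \<le> \<eta> * L * real K^2" using eta L by (intro mult_left_mono) auto
    with a have b: "\<eta> * L * real K \<le> 1/4" by simp
    have c: "0 \<le> \<eta> * L * real K" using eta L by simp
    have d: "(\<eta> * L * real K)^2 \<le> (1/4)^2" by (rule power_mono[OF b c])
    have e: "(\<eta> * L * real K)^2 = \<eta>^2 * real K^2 * L^2" by (simp add: power_mult_distrib)
    have "(1/4::real)^2 = 1/16" by (simp add: power2_eq_square)
    then show ?thesis using d e by linarith
  qed
  define P' where "P' \<omega> = fav_state \<eta> s w0 (\<lambda>r. S r \<omega> \<inter> {1..n}) (\<lambda>r j. hc r j \<omega>) t" for \<omega>
  define mu' where "mu' \<omega> = (1 / real (n + 1)) *\<^sub>R (fst (P' \<omega>) + (\<Sum>i = 1..n. snd (P' \<omega>) i))" for \<omega>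
  define g' where "g' \<omega> = gF (mu' \<omega>)" for \<omega>
  define \<Phi>' where "\<Phi>' \<omega> = norm (fst (P' \<omega>) - mu' \<omega>)^2 + (\<Sum>i = 1..n. norm (snd (P' \<omega>) i - mu' \<omega>)^2)" for \<omega>
  define V where "V = {\<omega> \<in> space M. \<forall>r\<in>{1..t}. S r \<omega> \<subseteq> {1..n}}"
  have AEV: "AE \<omega> in M. \<omega> \<in> V"
  proof -
    have "\<forall>r\<in>{1..t}. AE \<omega> in M. S r \<omega> \<subseteq> {1..n}"
    proof
      fix r assume "r \<in> {1..t}"
      then have r: "r \<ge> 1" by simp
      show "AE \<omega> in M. S r \<omega> \<subseteq> {1..n}" by (rule S_ae[OF M S_meas[OF r] s(2) S_unif[OF r]])
    qed
    then have "AE \<omega> in M. \<forall>r\<in>{1..t}. S r \<omega> \<subseteq> {1..n}" by (subst AE_finite_all) auto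
    then show ?thesis unfolding V_def using AE_space by eventually_elim auto
  qed
  have pathV: "fav_path M stoch K \<eta> s w0 S E htil t \<omega> = P' \<omega>" if "\<omega> \<in> V" for \<omega>
    unfolding fav_path_def P'_def hc_def
    by (rule fav_state_cong) (use that in \<open>auto simp: V_def\<close>)
  have muV: "\<mu> t \<omega> = mu' \<omega>" if "\<omega> \<in> V" for \<omega>
    using pathV[OF that] by (simp add: \<mu>_def fav_mu_def mu'_def Let_def)
  have PhiV: "\<Phi> t \<omega> = \<Phi>' \<omega>" if "\<omega> \<in> V" for \<omega>
    using pathV[OF that] muV[OF that] unfolding \<Phi>_def fav_Phi_def Let_def \<mu>_def
    by (simp add: \<Phi>'_def)
  have xqV: "xq (Suc t) i q \<omega> = snd (P' \<omega>) i - \<eta> *\<^sub>R (\<Sum>p = 1..<q. htil (Suc t) i p \<omega>)" if "\<omega> \<in> V" for \<omega> i q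
    using pathV[OF that] by (simp add: xq_def fav_query_def)
  define G0 where "G0 = past_gen M n S E htil t"
  define GC where "GC = G0 \<union> (\<Union>j\<in>{1..n}. \<Union>q\<in>{1..}. gen_events M borel (htil (Suc t) j q))"
  define GA where "GA = gen_events M (count_space UNIV) (S (Suc t)) \<union> (\<Union>j\<in>{1..n}. gen_events M (count_space UNIV) (E (Suc t) j))"
  define Gq where "Gq i q = G0 \<union> (\<Union>r\<in>{1..<q}. gen_events M borel (htil (Suc t) i r))" for i q
  have sM: "gen_events M (count_space UNIV) (S r) \<subseteq> sets M" if "r \<ge> 1" for r
    using that by (intro gen_sub S_meas)
  have eM: "gen_events M (count_space UNIV) (E r j) \<subseteq> sets M" if "r \<ge> 1" "j \<in> {1..n}" for r j
    using that by (intro gen_sub E_meas)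
  have hM: "gen_events M borel (htil r j q) \<subseteq> sets M" if "r \<ge> 1" "j \<in> {1..n}" "q \<ge> 1" for r j q :: nat
    using that by (intro gen_sub htil_meas)
  have G0M: "G0 \<subseteq> sets M"
    unfolding G0_def past_gen_def
  proof (intro UN_least Un_least)
    fix r j q :: nat assume "r \<in> {1..t}" "j \<in> {1..n}" "q \<in> {1..}"
    then show "gen_events M borel (htil r j q) \<subseteq> sets M" by (intro hM) auto
  next
    fix r j assume "r \<in> {1..t}" "j \<in> {1..n}"
    then show "gen_events M (count_space UNIV) (E r j) \<subseteq> sets M" by (intro eM) auto
  next
    fix r assume "r \<in> {1..t}"
    then show "gen_events M (count_space UNIV) (S r) \<subseteq> sets M" by (intro sM) auto
  qed
  have GCM: "GC \<subseteq> sets M"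
    unfolding GC_def
  proof (intro UN_least Un_least G0M)
    fix j q :: nat assume "j \<in> {1..n}" "q \<in> {1..}"
    then show "gen_events M borel (htil (Suc t) j q) \<subseteq> sets M" by (intro hM) auto
  qed
  have GAM: "GA \<subseteq> sets M"
    unfolding GA_def
  proof (intro UN_least Un_least)
    show "gen_events M (count_space UNIV) (S (Suc t)) \<subseteq> sets M" by (intro sM) auto
    fix j assume "j \<in> {1..n}"
    then show "gen_events M (count_space UNIV) (E (Suc t) j) \<subseteq> sets M" by (intro eM) auto
  qed
  have GqM: "Gq i q \<subseteq> sets M" if "i \<in> {1..n}" for i q
    unfolding Gq_def
  proof (intro UN_least Un_least G0M)
    fix r assume "r \<in> {1..<q}"
    then show "gen_events M borel (htil (Suc t) i r) \<subseteq> sets M" using that by (intro hM) auto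
  qed
  have PowM: "G \<subseteq> Pow (space M)" if "G \<subseteq> sets M" for G using that sets.sets_into_space by auto
  have Pmeas: "(\<lambda>\<omega>. fst (P' \<omega>)) \<in> borel_measurable (sigma (space M) G) \<and> (\<forall>i. (\<lambda>\<omega>. snd (P' \<omega>) i) \<in> borel_measurable (sigma (space M) G))"
    if G1: "G0 \<subseteq> G" and G2: "G \<subseteq> sets M" for G
  proof -
    have GP: "G \<subseteq> Pow (space M)" using PowM[OF G2] .
    show ?thesis unfolding P'_def
    proof (rule fav_state_meas[OF GP])
      fix r i assume r: "r \<in> {1..t}"
      have "S r -` {A. i \<in> A} \<inter> space M \<in> gen_events M (count_space UNIV) (S r)"
        unfolding gen_events_def by (intro CollectI exI[of _ "{A. i \<in> A}"]) auto
      then have "S r -` {A. i \<in> A} \<inter> space M \<in> G" using past_gen_S[OF r, where M=M and S=S and n=n and E=E and htil=htil] G1 unfolding G0_def by auto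
      moreover have "S r -` {A. i \<in> A} \<inter> space M = {\<omega>\<in>space M. i \<in> S r \<omega>}" by auto
      ultimately show "{\<omega>\<in>space M. i \<in> S r \<omega>} \<in> sigma_sets (space M) G" by (auto intro: sigma_sets.Basic)
    next
      fix r j assume r: "r \<in> {1..t}" and j: "j \<in> {1..n}"
      show "hc r j \<in> borel_measurable (sigma (space M) G)"
        unfolding hc_def
      proof (rule hc_meas[OF GP])
        fix B
        have "E r j -` B \<inter> space M \<in> gen_events M (count_space UNIV) (E r j)"
          unfolding gen_events_def by auto
        then have "E r j -` B \<inter> space M \<in> G" using past_gen_E[OF r j, where M=M and S=S and E=E and htil=htil] G1 unfolding G0_def by auto
        then show "E r j -` B \<inter> space M \<in> sigma_sets (space M) G" by auto
      next
        fix q :: nat assume q: "q \<ge> 1"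
        have "gen_events M borel (htil r j q) \<subseteq> G" using past_gen_h[OF r j q, where M=M and S=S and E=E] G1 unfolding G0_def by auto
        then show "htil r j q \<in> borel_measurable (sigma (space M) G)"
          by (rule gen_meas) (use GP in auto)
      qed
    qed
  qed
  have mu'meas: "mu' \<in> borel_measurable (sigma (space M) G)" if "G0 \<subseteq> G" "G \<subseteq> sets M" for G
    using Pmeas[OF that] unfolding mu'_def[abs_def]
    by (intro borel_measurable_scaleR borel_measurable_const borel_measurable_add borel_measurable_sum) auto
  have g'meas: "g' \<in> borel_measurable (sigma (space M) G)" if "G0 \<subseteq> G" "G \<subseteq> sets M" for G
    using measurable_compose[OF mu'meas[OF that] gFm] unfolding g'_def[abs_def] by (simp add: comp_def)
  have sub0: "subalgebra M (sigma (space M) G0)" by (rule subalg_sigma[OF G0M])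
  have P'M: "(\<lambda>\<omega>. snd (P' \<omega>) i) \<in> borel_measurable M" "(\<lambda>\<omega>. fst (P' \<omega>)) \<in> borel_measurable M" for i
    using Pmeas[OF order_refl G0M] measurable_from_subalg[OF sub0] by auto
  have mu'M: "mu' \<in> borel_measurable M" by (rule measurable_from_subalg[OF sub0 mu'meas[OF order_refl G0M]])
  have g'M: "g' \<in> borel_measurable M" by (rule measurable_from_subalg[OF sub0 g'meas[OF order_refl G0M]])
  have \<Phi>'M: "\<Phi>' \<in> borel_measurable M"
    unfolding \<Phi>'_def[abs_def] using P'M mu'M by measurable
  have subM: "subalgebra M (sigma (space M) (sets M))" by (rule subalg_sigma) simp
  have htilS: "htil r j q \<in> borel_measurable (sigma (space M) (sets M))" if "r \<ge> 1" "j \<in> {1..n}" "q \<ge> 1" for r j q :: nat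
    by (rule gen_meas[OF hM[OF that]]) (use PowM in auto)
  have hcM: "hc r j \<in> borel_measurable M" if "r \<ge> 1" "j \<in> {1..n}" for r j
  proof -
    have "hc r j \<in> borel_measurable (sigma (space M) (sets M))"
      unfolding hc_def
    proof (rule hc_meas)
      show "sets M \<subseteq> Pow (space M)" using PowM by auto
      fix B
      show "E r j -` B \<inter> space M \<in> sigma_sets (space M) (sets M)"
        using measurable_sets[OF E_meas[OF that], of B] by auto
    next
      fix q :: nat assume "q \<ge> 1"
      then show "htil r j q \<in> borel_measurable (sigma (space M) (sets M))" using htilS that by auto
    qed
    then show ?thesis by (rule measurable_from_subalg[OF subM])
  qed
  have g2: "integrable M (\<lambda>\<omega>. norm (g' \<omega>)^2)"
  proof -
    have gV: "norm (gF (\<mu> t \<omega>))^2 = norm (g' \<omega>)^2" if "\<omega> \<in> V" for \<omega>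
    proof -
      have "\<mu> t \<omega> = mu' \<omega>" by (rule muV[OF that])
      then show ?thesis unfolding g'_def by (rule arg_cong)
    qed
    have AEg: "AE \<omega> in M. norm (gF (\<mu> t \<omega>))^2 = norm (g' \<omega>)^2"
      by (rule AE_mp[OF AEV], rule AE_I2, rule impI, erule gV)
    have m: "(\<lambda>\<omega>. norm (g' \<omega>)^2) \<in> borel_measurable M" using g'M by measurable
    show ?thesis by (rule integrable_cong_AE_imp[OF int_grad[of t] m AEg])
  qed
  have \<Phi>'i: "integrable M \<Phi>'"
  proof -
    have AEP: "AE \<omega> in M. \<Phi> t \<omega> = \<Phi>' \<omega>" by (rule AE_mp[OF AEV], rule AE_I2, rule impI, erule PhiV)
    show ?thesis by (rule integrable_cong_AE_imp[OF int_Phi[of t] \<Phi>'M AEP])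
  qed
  have client: "(\<integral>\<omega>. g' \<omega> \<bullet> - hc (Suc t) i \<omega> \<partial>M) \<le> - (\<integral>\<omega>. g' \<omega> \<bullet> gf i (mu' \<omega>) \<partial>M) + (\<integral>\<omega>. norm (g' \<omega>)^2 \<partial>M) / 4
     + L^2 * (20 * (\<integral>\<omega>. norm (snd (P' \<omega>) i - mu' \<omega>)^2 \<partial>M) + 4 * \<eta>^2 * real K^2 * \<sigma>^2
              + 16 * \<eta>^2 * real K^2 * (\<integral>\<omega>. norm (gf i (mu' \<omega>))^2 \<partial>M))"
    if i: "i \<in> {1..n}" for i
  proof -
    define P0 where "P0 = measure M {\<omega>'\<in>space M. E (Suc t) i \<omega>' > 0}"
    define Q0 where "Q0 = (\<integral>\<omega>'. real (min (E (Suc t) i \<omega>') K) \<partial>M)"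
    define \<alpha>f where "\<alpha>f e = (if stoch then P0 * real (min e K) else Q0)" for e
    define cq where "cq q e = (if 0 < e \<and> q \<le> e then 1 / \<alpha>f e else 0)" for q e :: nat
    have P0pos: "0 < P0" unfolding P0_def using E_pos[of "Suc t" i] i by simp
    have Em: "E (Suc t) i \<in> measurable M (count_space UNIV)" using E_meas i by simp
    have Ecomp: "(\<lambda>\<omega>. h (E (Suc t) i \<omega>)) \<in> borel_measurable M" for h :: "nat \<Rightarrow> real"
      using measurable_compose[OF Em, of h borel] by (simp add: comp_def)
    have Eev: "{\<omega>'\<in>space M. E (Suc t) i \<omega>' > 0} \<in> sets M"
    proof -
      have "E (Suc t) i -` {e. e > 0} \<inter> space M \<in> sets M" using Em by (rule measurable_sets) simp
      moreover have "E (Suc t) i -` {e. e > 0} \<inter> space M = {\<omega>'\<in>space M. E (Suc t) i \<omega>' > 0}" by auto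
      ultimately show ?thesis by simp
    qed
    have minint: "integrable M (\<lambda>\<omega>. real (min (E (Suc t) i \<omega>) K))"
      by (rule P.integrable_const_bound[where B="real K"]) (use Ecomp in auto)
    have indint: "integrable M (indicator {\<omega>'\<in>space M. E (Suc t) i \<omega>' > 0} :: 'a \<Rightarrow> real)"
      by (rule P.integrable_const_bound[where B=1]) (auto intro: borel_measurable_indicator[OF Eev] simp: indicator_def)
    have P0int: "P0 = (\<integral>\<omega>. indicator {\<omega>'\<in>space M. E (Suc t) i \<omega>' > 0} \<omega> \<partial>M)"
      unfolding P0_def using Eev by (simp add: Int_absorb2 sets.sets_into_space)
    have Q0pos: "0 < Q0"
    proof -
      have "P0 \<le> Q0" unfolding P0int Q0_def
        by (rule integral_mono[OF indint minint]) (use K in \<open>auto simp: indicator_def\<close>)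
      then show ?thesis using P0pos by simp
    qed
    have \<alpha>pos: "0 < \<alpha>f e" if "0 < e" for e
      using that P0pos Q0pos K by (auto simp: \<alpha>f_def)
    have cq0: "0 \<le> cq q e" for q e unfolding cq_def using \<alpha>pos[of e] by (auto intro: less_imp_le)
    have cqb: "\<bar>cq q e\<bar> \<le> 1 / P0 + 1 / Q0" for q e
    proof (cases "0 < e \<and> q \<le> e")
      case True
      have "1 / \<alpha>f e \<le> 1 / P0 + 1 / Q0"
      proof (cases stoch)
        case True
        have "P0 * 1 \<le> P0 * real (min e K)" using \<open>0 < e \<and> q \<le> e\<close> K P0pos by (intro mult_left_mono) auto
        then have "1 / \<alpha>f e \<le> 1 / P0" using True P0pos by (auto simp: \<alpha>f_def intro!: divide_left_mono)
        then show ?thesis using Q0pos by (smt (verit) divide_pos_pos)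
      next
        case False
        then show ?thesis using P0pos by (simp add: \<alpha>f_def)
      qed
      then show ?thesis using cq0[of q e] True by (simp add: cq_def)
    next
      case False
      then have "cq q e = 0" unfolding cq_def by (rule if_not_P)
      then show ?thesis using P0pos Q0pos by simp
    qed
    have hcv: "hc (Suc t) i \<omega> = (\<Sum>q = 1..K. cq q (E (Suc t) i \<omega>) *\<^sub>R htil (Suc t) i q \<omega>)" for \<omega>
    proof -
      let ?e = "E (Suc t) i \<omega>"
      have al: "fav_alpha M stoch K E (Suc t) i \<omega> = \<alpha>f ?e" by (simp add: fav_alpha_def \<alpha>f_def P0_def Q0_def)
      show ?thesis
      proof (cases "0 < ?e")
        case True
        have set: "{1..min ?e K} = {q \<in> {1..K}. q \<le> ?e}" by auto
        have "hc (Suc t) i \<omega> = (1 / \<alpha>f ?e) *\<^sub>R (\<Sum>q\<in>{q \<in> {1..K}. q \<le> ?e}. htil (Suc t) i q \<omega>)"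
          unfolding hc_def fav_hc_def hcheck_def al set using True by simp
        also have "\<dots> = (\<Sum>q\<in>{1..K}. if q \<le> ?e then (1 / \<alpha>f ?e) *\<^sub>R htil (Suc t) i q \<omega> else 0)"
          unfolding scaleR_sum_right by (rule sum.inter_filter) simp
        also have "\<dots> = (\<Sum>q = 1..K. cq q ?e *\<^sub>R htil (Suc t) i q \<omega>)"
          by (rule sum.cong) (auto simp: cq_def True)
        finally show ?thesis .
      next
        case False
        then show ?thesis by (simp add: hc_def fav_hc_def hcheck_def cq_def)
      qed
    qed
    have csumpt: "(\<Sum>q = 1..K. cq q e) = (if 0 < e then real (min e K) / \<alpha>f e else 0)" for e
    proof (cases "0 < e")
      case True
      have "(\<Sum>q = 1..K. cq q e) = (\<Sum>q\<in>{1..K}. if q \<le> e then 1 / \<alpha>f e else 0)"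
        by (rule sum.cong) (auto simp: cq_def True)
      also have "\<dots> = (\<Sum>q\<in>{q\<in>{1..K}. q \<le> e}. 1 / \<alpha>f e)" by (rule sum.inter_filter[symmetric]) simp
      also have "{q\<in>{1..K}. q \<le> e} = {1..min e K}" by auto
      also have "(\<Sum>q\<in>{1..min e K}. 1 / \<alpha>f e) = real (min e K) / \<alpha>f e" by simp
      finally show ?thesis using True by simp
    next
      case False then show ?thesis by (simp add: cq_def)
    qed
    have cqint: "integrable M (\<lambda>\<omega>. cq q (E (Suc t) i \<omega>))" for q :: nat
      by (rule P.integrable_const_bound[where B="1 / P0 + 1 / Q0"]) (use Ecomp cqb in auto)
    have csum: "(\<Sum>q = 1..K. \<integral>\<omega>. cq q (E (Suc t) i \<omega>) \<partial>M) = 1"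
    proof -
      have "(\<Sum>q = 1..K. \<integral>\<omega>. cq q (E (Suc t) i \<omega>) \<partial>M) = (\<integral>\<omega>. (\<Sum>q = 1..K. cq q (E (Suc t) i \<omega>)) \<partial>M)"
        using cqint by (intro Bochner_Integration.integral_sum[symmetric]) auto
      also have "\<dots> = (\<integral>\<omega>. (if 0 < E (Suc t) i \<omega> then real (min (E (Suc t) i \<omega>) K) / \<alpha>f (E (Suc t) i \<omega>) else 0) \<partial>M)"
        by (rule Bochner_Integration.integral_cong[OF refl], rule csumpt)
      also have "\<dots> = 1"
      proof (cases stoch)
        case True
        have "(\<integral>\<omega>. (if 0 < E (Suc t) i \<omega> then real (min (E (Suc t) i \<omega>) K) / \<alpha>f (E (Suc t) i \<omega>) else 0) \<partial>M)
            = (\<integral>\<omega>. indicator {\<omega>'\<in>space M. E (Suc t) i \<omega>' > 0} \<omega> / P0 \<partial>M)"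
        proof (rule Bochner_Integration.integral_cong[OF refl])
          fix \<omega> assume "\<omega> \<in> space M"
          show "(if 0 < E (Suc t) i \<omega> then real (min (E (Suc t) i \<omega>) K) / \<alpha>f (E (Suc t) i \<omega>) else 0)
            = indicator {\<omega>'\<in>space M. E (Suc t) i \<omega>' > 0} \<omega> / P0"
            using \<open>\<omega> \<in> space M\<close> True K P0pos by (auto simp: \<alpha>f_def indicator_def)
        qed
        also have "\<dots> = P0 / P0" using P0int by simp
        also have "\<dots> = 1" using P0pos by simp
        finally show ?thesis .
      next
        case False
        have "(\<integral>\<omega>. (if 0 < E (Suc t) i \<omega> then real (min (E (Suc t) i \<omega>) K) / \<alpha>f (E (Suc t) i \<omega>) else 0) \<partial>M)
            = (\<integral>\<omega>. real (min (E (Suc t) i \<omega>) K) / Q0 \<partial>M)"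
          by (rule Bochner_Integration.integral_cong[OF refl]) (use False in \<open>auto simp: \<alpha>f_def\<close>)
        also have "\<dots> = Q0 / Q0" by (simp add: Q0_def)
        also have "\<dots> = 1" using Q0pos by simp
        finally show ?thesis .
      qed
      finally show ?thesis .
    qed
    have cpos: "0 \<le> (\<integral>\<omega>. cq q (E (Suc t) i \<omega>) \<partial>M)" for q :: nat
      by (rule integral_nonneg_AE) (use cq0 in auto)
    have osa: "other_sa M n S E htil (Suc t) = sigma_sets (space M) GC"
      by (simp add: other_sa_def GC_def G0_def)
    have indep': "measure M (a \<inter> d) = measure M a * measure M d"
      if "a \<in> sigma_sets (space M) GA" "d \<in> sigma_sets (space M) GC" for a d
      using indep_new[of "Suc t" a d] that osa unfolding GA_def by simp
    have XA: "E (Suc t) i -` B \<inter> space M \<in> sigma_sets (space M) GA" for B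
    proof -
      have "E (Suc t) i -` B \<inter> space M \<in> gen_events M (count_space UNIV) (E (Suc t) i)"
        unfolding gen_events_def by (intro CollectI exI[of _ B]) auto
      then have "E (Suc t) i -` B \<inter> space M \<in> GA" unfolding GA_def using i by blast
      then show ?thesis by (rule sigma_sets.Basic)
    qed
    have G0C: "G0 \<subseteq> GC" unfolding GC_def by auto
    have htC: "htil (Suc t) i q \<in> borel_measurable (sigma (space M) GC)" if "q \<ge> 1" for q :: nat
      by (rule gen_meas) (use that i PowM[OF GCM] in \<open>auto simp: GC_def\<close>)
    have htM: "htil (Suc t) i q \<in> borel_measurable M" if "q \<ge> 1" for q using htil_meas i that by simp
    have ht2: "integrable M (\<lambda>\<omega>. norm (htil (Suc t) i q \<omega>)^2)" if "q \<ge> 1" for q using int_htil i that by simp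
    have Zi: "integrable M (\<lambda>\<omega>. g' \<omega> \<bullet> - htil (Suc t) i q \<omega>)" if "q \<ge> 1" for q :: nat
      by (rule integrable_inner_sq) (use g'M htM[OF that] g2 ht2[OF that] in auto)
    have Zm: "(\<lambda>\<omega>. g' \<omega> \<bullet> - htil (Suc t) i q \<omega>) \<in> borel_measurable (sigma (space M) GC)" if "q \<ge> 1" for q :: nat
      using g'meas[OF G0C GCM] htC[OF that] by measurable
    note IF = indep_factor[OF M GAM GCM indep' Em XA Zm Zi cqb]
    define D where "D q \<omega> = \<eta> *\<^sub>R (\<Sum>p = 1..<q. htil (Suc t) i p \<omega>)" for q \<omega>
    define \<xi> where "\<xi> q \<omega> = htil (Suc t) i q \<omega> - gf i (snd (P' \<omega>) i - D q \<omega>)" for q \<omega>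
    define \<xi>o where "\<xi>o q \<omega> = htil (Suc t) i q \<omega> - gf i (xq (Suc t) i q \<omega>)" for q \<omega>
    have AE\<xi>: "AE \<omega> in M. \<xi>o q \<omega> = \<xi> q \<omega>" for q :: nat
      by (rule AE_mp[OF AEV], rule AE_I2, rule impI) (simp only: \<xi>o_def \<xi>_def D_def xqV)
    have \<xi>M: "\<xi> q \<in> borel_measurable M" if "q \<in> {1..K}" for q :: nat
    proof -
      have "htil (Suc t) i p \<in> borel_measurable M" if "p \<in> {1..<q}" for p using htM that by auto
      then have "D q \<in> borel_measurable M" unfolding D_def[abs_def]
        by (intro borel_measurable_scaleR borel_measurable_const borel_measurable_sum) auto
      then have a: "(\<lambda>\<omega>. snd (P' \<omega>) i - D q \<omega>) \<in> borel_measurable M"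
        by (intro borel_measurable_diff P'M)
      have b: "(\<lambda>\<omega>. gf i (snd (P' \<omega>) i - D q \<omega>)) \<in> borel_measurable M"
        by (rule measurable_compose[OF a gfm[OF i]])
      have c: "htil (Suc t) i q \<in> borel_measurable M" using htM that by auto
      show ?thesis unfolding \<xi>_def[abs_def] by (rule borel_measurable_diff[OF c b])
    qed
    have \<xi>oi: "integrable M (\<xi>o q)" if "q \<ge> 1" for q :: nat
      unfolding \<xi>o_def[abs_def] using noise_int[of "Suc t" i q] i that by simp
    have \<xi>i: "integrable M (\<xi> q)" if "q \<in> {1..K}" for q :: nat
      using that by (intro integrable_cong_AE_imp[OF \<xi>oi[of q] \<xi>M[OF that] AE\<xi>[of q]]) auto
    have qsa: "query_sa M n S E htil (Suc t) i q = sigma_sets (space M) (Gq i q)" for q :: nat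
      by (simp add: query_sa_def Gq_def G0_def)
    have \<xi>var: "integrable M (\<lambda>\<omega>. norm (\<xi> q \<omega>)^2) \<and> (\<integral>\<omega>. norm (\<xi> q \<omega>)^2 \<partial>M) \<le> \<sigma>^2" if q: "q \<in> {1..K}" for q :: nat
    proof -
      have top: "space M \<in> query_sa M n S E htil (Suc t) i q" unfolding qsa by (rule sigma_sets_top)
      have nv: "(\<integral>\<^sup>+\<omega>. indicator (space M) \<omega> * ennreal (norm (\<xi>o q \<omega>)^2) \<partial>M) \<le> ennreal (\<sigma>^2) * emeasure M (space M)"
        using noise_var[of "Suc t" i q "space M"] i q top by (simp add: \<xi>o_def)
      have e1: "(\<integral>\<^sup>+\<omega>. indicator (space M) \<omega> * ennreal (norm (\<xi>o q \<omega>)^2) \<partial>M) = (\<integral>\<^sup>+\<omega>. ennreal (norm (\<xi>o q \<omega>)^2) \<partial>M)"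
        by (rule nn_integral_cong) simp
      have nv2: "(\<integral>\<^sup>+\<omega>. ennreal (norm (\<xi>o q \<omega>)^2) \<partial>M) \<le> ennreal (\<sigma>^2)"
        using nv unfolding e1 by (simp add: P.emeasure_space_1)
      have \<xi>oM: "\<xi>o q \<in> borel_measurable M" using \<xi>oi[of q] q by auto
      have int: "integrable M (\<lambda>\<omega>. norm (\<xi>o q \<omega>)^2)"
        by (rule integrableI_nonneg) (use \<xi>oM nv2 in \<open>auto simp: order_le_less_trans\<close>)
      have ie: "ennreal (\<integral>\<omega>. norm (\<xi>o q \<omega>)^2 \<partial>M) = (\<integral>\<^sup>+\<omega>. ennreal (norm (\<xi>o q \<omega>)^2) \<partial>M)"
        by (rule nn_integral_eq_integral[symmetric]) (use int in auto)
      have "ennreal (\<integral>\<omega>. norm (\<xi>o q \<omega>)^2 \<partial>M) \<le> ennreal (\<sigma>^2)" using ie nv2 by (rule ord_eq_le_trans)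
      then have le: "(\<integral>\<omega>. norm (\<xi>o q \<omega>)^2 \<partial>M) \<le> \<sigma>^2" by (metis ennreal_le_iff zero_le_power2)
      have ae2: "AE \<omega> in M. norm (\<xi>o q \<omega>)^2 = norm (\<xi> q \<omega>)^2" using AE\<xi>[of q] by eventually_elim simp
      have m2: "(\<lambda>\<omega>. norm (\<xi> q \<omega>)^2) \<in> borel_measurable M" using \<xi>M[OF q] by measurable
      have int2: "integrable M (\<lambda>\<omega>. norm (\<xi> q \<omega>)^2)" by (rule integrable_cong_AE_imp[OF int m2 ae2])
      have "(\<integral>\<omega>. norm (\<xi>o q \<omega>)^2 \<partial>M) = (\<integral>\<omega>. norm (\<xi> q \<omega>)^2 \<partial>M)"
        by (rule integral_cong_AE) (use \<xi>oM m2 ae2 in auto)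
      then show ?thesis using int2 le by simp
    qed
    have \<xi>mean: "(\<integral>\<omega>. g' \<omega> \<bullet> \<xi> q \<omega> \<partial>M) = 0" if q: "q \<in> {1..K}" for q :: nat
    proof (rule cond_mean_zero_vec[OF M GqM[OF i]])
      show "g' \<in> borel_measurable (sigma (space M) (Gq i q))"
        by (rule g'meas) (use GqM[OF i] in \<open>auto simp: Gq_def\<close>)
      show "integrable M (\<xi> q)" by (rule \<xi>i[OF q])
      show "integrable M (\<lambda>\<omega>. norm (g' \<omega>)^2)" by (rule g2)
      show "integrable M (\<lambda>\<omega>. norm (\<xi> q \<omega>)^2)" using \<xi>var[OF q] by simp
      fix A assume A: "A \<in> sigma_sets (space M) (Gq i q)"
      have AM: "A \<in> sets M" using A sets.sigma_sets_subset[OF GqM[OF i]] by auto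
      have "set_lebesgue_integral M A (\<xi> q) = set_lebesgue_integral M A (\<xi>o q)"
        unfolding set_lebesgue_integral_def
      proof (rule integral_cong_AE)
        show "(\<lambda>x. indicator A x *\<^sub>R \<xi> q x) \<in> borel_measurable M" using AM \<xi>M[OF q] by measurable
        have "\<xi>o q \<in> borel_measurable M" using \<xi>oi[of q] q by auto
        then show "(\<lambda>x. indicator A x *\<^sub>R \<xi>o q x) \<in> borel_measurable M" using AM by measurable
        show "AE x in M. indicator A x *\<^sub>R \<xi> q x = indicator A x *\<^sub>R \<xi>o q x" using AE\<xi>[of q] by eventually_elim simp
      qed
      also have "\<dots> = 0" using noise_mean[of "Suc t" i q A] i q A qsa by (simp add: \<xi>o_def[abs_def])
      finally show "set_lebesgue_integral M A (\<xi> q) = 0" .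
    qed
    have w2: "integrable M (\<lambda>\<omega>. norm (snd (P' \<omega>) i - mu' \<omega>)^2)"
    proof (rule integrable_nonneg_bound[OF \<Phi>'i])
      show "(\<lambda>\<omega>. norm (snd (P' \<omega>) i - mu' \<omega>)^2) \<in> borel_measurable M" using P'M mu'M by measurable
      fix \<omega>
      have "norm (snd (P' \<omega>) i - mu' \<omega>)^2 \<le> (\<Sum>j = 1..n. norm (snd (P' \<omega>) j - mu' \<omega>)^2)"
        by (rule member_le_sum) (use i in auto)
      then show "norm (snd (P' \<omega>) i - mu' \<omega>)^2 \<le> \<Phi>' \<omega>" unfolding \<Phi>'_def
        using zero_le_power2[of "norm (fst (P' \<omega>) - mu' \<omega>)"] by linarith
    qed simp
    have Fbound: "norm (gf i x)^2 \<le> real n * G^2 + real n * B^2 * norm (gF x)^2" for x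
    proof -
      have "norm (gf i x)^2 \<le> (\<Sum>j = 1..n. norm (gf j x)^2)" by (rule member_le_sum) (use i in auto)
      also have "\<dots> \<le> real n * (G^2 + B^2 * norm (gF x)^2)" using dissim[of x] n0 by (simp add: divide_le_eq mult.commute)
      finally show ?thesis by (simp add: algebra_simps)
    qed
    have Fm2: "integrable M (\<lambda>\<omega>. norm (gf i (mu' \<omega>))^2)"
    proof (rule integrable_nonneg_bound)
      show "integrable M (\<lambda>\<omega>. real n * G^2 + real n * B^2 * norm (g' \<omega>)^2)" using g2 by auto
      show "(\<lambda>\<omega>. norm (gf i (mu' \<omega>))^2) \<in> borel_measurable M"
        using measurable_compose[OF mu'M gfm[OF i]] by measurable
    qed (use Fbound in \<open>auto simp: g'_def\<close>)
    show ?thesis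
    proof (rule client_bound[where g=g' and w="\<lambda>\<omega>. snd (P' \<omega>) i" and m=mu' and ht="htil (Suc t) i"
          and F="gf i" and c=cq and X="E (Suc t) i" and hcv="hc (Suc t) i" and \<eta>=\<eta> and L=L and \<sigma>=\<sigma> and K=K and M=M])
      show "prob_space M" by (rule M)
    qed (use K eta L \<theta> lip[OF i] gfm[OF i] g'M P'M mu'M htM g2 w2 Fm2 ht2 \<xi>var \<xi>mean hcv IF cpos csum
       in \<open>auto simp: \<xi>_def D_def\<close>)
  qed
  have FbG: "norm (gf i x)^2 \<le> real n * G^2 + real n * B^2 * norm (gF x)^2" if i: "i \<in> {1..n}" for i x
  proof -
    have "norm (gf i x)^2 \<le> (\<Sum>j = 1..n. norm (gf j x)^2)" by (rule member_le_sum) (use i in auto)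
    also have "\<dots> \<le> real n * (G^2 + B^2 * norm (gF x)^2)" using dissim[of x] n0 by (simp add: divide_le_eq mult.commute)
    finally show ?thesis by (simp add: algebra_simps)
  qed
  have Fm2G: "integrable M (\<lambda>\<omega>. norm (gf i (mu' \<omega>))^2)" if i: "i \<in> {1..n}" for i
  proof (rule integrable_nonneg_bound)
    show "integrable M (\<lambda>\<omega>. real n * G^2 + real n * B^2 * norm (g' \<omega>)^2)" using g2 by auto
    show "(\<lambda>\<omega>. norm (gf i (mu' \<omega>))^2) \<in> borel_measurable M"
      using measurable_compose[OF mu'M gfm[OF i]] by measurable
  qed (use FbG[OF i] in \<open>auto simp: g'_def\<close>)
  have w2G: "integrable M (\<lambda>\<omega>. norm (snd (P' \<omega>) i - mu' \<omega>)^2)" if i: "i \<in> {1..n}" for i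
  proof (rule integrable_nonneg_bound[OF \<Phi>'i])
    show "(\<lambda>\<omega>. norm (snd (P' \<omega>) i - mu' \<omega>)^2) \<in> borel_measurable M" using P'M mu'M by measurable
    fix \<omega>
    have "norm (snd (P' \<omega>) i - mu' \<omega>)^2 \<le> (\<Sum>j = 1..n. norm (snd (P' \<omega>) j - mu' \<omega>)^2)"
      by (rule member_le_sum) (use i in auto)
    then show "norm (snd (P' \<omega>) i - mu' \<omega>)^2 \<le> \<Phi>' \<omega>" unfolding \<Phi>'_def
      using zero_le_power2[of "norm (fst (P' \<omega>) - mu' \<omega>)"] by linarith
  qed simp
  have LHS_eq: "(\<integral>\<omega>. gF (\<mu> t \<omega>) \<bullet> (- hc (t + 1) i \<omega>) \<partial>M) = (\<integral>\<omega>. g' \<omega> \<bullet> - hc (Suc t) i \<omega> \<partial>M)"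
    if i: "i \<in> {1..n}" for i
  proof (rule integral_cong_AE)
    show "(\<lambda>\<omega>. gF (\<mu> t \<omega>) \<bullet> (- hc (t + 1) i \<omega>)) \<in> borel_measurable M" using int_inner[OF i, of t] by auto
    have hm: "hc (Suc t) i \<in> borel_measurable M" using hcM i by simp
    show "(\<lambda>\<omega>. g' \<omega> \<bullet> - hc (Suc t) i \<omega>) \<in> borel_measurable M" using g'M hm by measurable
    have eqV: "gF (\<mu> t \<omega>) \<bullet> (- hc (t + 1) i \<omega>) = g' \<omega> \<bullet> - hc (Suc t) i \<omega>" if "\<omega> \<in> V" for \<omega>
    proof -
      have "\<mu> t \<omega> = mu' \<omega>" by (rule muV[OF that])
      then show ?thesis unfolding g'_def by simp
    qed
    show "AE \<omega> in M. gF (\<mu> t \<omega>) \<bullet> (- hc (t + 1) i \<omega>) = g' \<omega> \<bullet> - hc (Suc t) i \<omega>"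
      by (rule AE_mp[OF AEV], rule AE_I2, rule impI, erule eqV)
  qed
  have Phi_eq: "(\<integral>\<omega>. \<Phi> t \<omega> \<partial>M) = (\<integral>\<omega>. \<Phi>' \<omega> \<partial>M)"
  proof (rule integral_cong_AE)
    show "\<Phi> t \<in> borel_measurable M" using int_Phi[of t] by auto
    show "\<Phi>' \<in> borel_measurable M" by (rule \<Phi>'M)
    show "AE \<omega> in M. \<Phi> t \<omega> = \<Phi>' \<omega>" by (rule AE_mp[OF AEV], rule AE_I2, rule impI, erule PhiV)
  qed
  have grad_eq: "(\<integral>\<omega>. norm (gF (\<mu> t \<omega>))^2 \<partial>M) = (\<integral>\<omega>. norm (g' \<omega>)^2 \<partial>M)"
  proof (rule integral_cong_AE)
    show "(\<lambda>\<omega>. norm (gF (\<mu> t \<omega>))^2) \<in> borel_measurable M" using int_grad[of t] by auto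
    show "(\<lambda>\<omega>. norm (g' \<omega>)^2) \<in> borel_measurable M" using g'M by measurable
    have eqV: "norm (gF (\<mu> t \<omega>))^2 = norm (g' \<omega>)^2" if "\<omega> \<in> V" for \<omega>
    proof -
      have "\<mu> t \<omega> = mu' \<omega>" by (rule muV[OF that])
      then show ?thesis unfolding g'_def by simp
    qed
    show "AE \<omega> in M. norm (gF (\<mu> t \<omega>))^2 = norm (g' \<omega>)^2"
      by (rule AE_mp[OF AEV], rule AE_I2, rule impI, erule eqV)
  qed
  define Gg where "Gg = (\<integral>\<omega>. norm (g' \<omega>)^2 \<partial>M)"
  define a where "a i = (\<integral>\<omega>. norm (snd (P' \<omega>) i - mu' \<omega>)^2 \<partial>M)" for i
  define b where "b i = (\<integral>\<omega>. norm (gf i (mu' \<omega>))^2 \<partial>M)" for i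
  define I where "I i = (\<integral>\<omega>. g' \<omega> \<bullet> gf i (mu' \<omega>) \<partial>M)" for i
  define C where "C = 4 * \<eta>^2 * real K^2 * \<sigma>^2"
  define e where "e = 16 * L^2 * \<eta>^2 * real K^2"
  have LHS: "(\<Sum>i = 1..n. \<integral>\<omega>. gF (\<mu> t \<omega>) \<bullet> (- hc (t + 1) i \<omega>) \<partial>M)
      \<le> (\<Sum>i = 1..n. - I i + Gg / 4 + L^2 * (20 * a i + 4 * \<eta>^2 * real K^2 * \<sigma>^2 + 16 * \<eta>^2 * real K^2 * b i))"
  proof (rule sum_mono)
    fix i assume i: "i \<in> {1..n}"
    show "(\<integral>\<omega>. gF (\<mu> t \<omega>) \<bullet> (- hc (t + 1) i \<omega>) \<partial>M)
      \<le> - I i + Gg / 4 + L^2 * (20 * a i + 4 * \<eta>^2 * real K^2 * \<sigma>^2 + 16 * \<eta>^2 * real K^2 * b i)"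
      unfolding LHS_eq[OF i] I_def Gg_def a_def b_def by (rule client[OF i])
  qed
  have pw: "- I i + Gg / 4 + L^2 * (20 * a i + 4 * \<eta>^2 * real K^2 * \<sigma>^2 + 16 * \<eta>^2 * real K^2 * b i)
      = (- I i) + (Gg / 4 + L^2 * C) + (20 * L^2) * a i + e * b i" for i
    by (simp add: C_def e_def algebra_simps)
  have RHS1: "(\<Sum>i = 1..n. - I i + Gg / 4 + L^2 * (20 * a i + 4 * \<eta>^2 * real K^2 * \<sigma>^2 + 16 * \<eta>^2 * real K^2 * b i))
      = - (\<Sum>i = 1..n. I i) + real n * (Gg / 4 + L^2 * C) + (20 * L^2) * (\<Sum>i = 1..n. a i) + e * (\<Sum>i = 1..n. b i)"
    unfolding pw by (simp add: sum.distrib sum_distrib_left sum_negf sum_subtractf)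
  have sumI: "(\<Sum>i = 1..n. I i) = real n * Gg"
  proof -
    have ii: "integrable M (\<lambda>\<omega>. g' \<omega> \<bullet> gf i (mu' \<omega>))" if "i \<in> {1..n}" for i
      by (rule integrable_inner_sq[OF g'M _ g2 Fm2G[OF that]]) (rule measurable_compose[OF mu'M gfm[OF that]])
    have "(\<Sum>i = 1..n. I i) = (\<integral>\<omega>. (\<Sum>i = 1..n. g' \<omega> \<bullet> gf i (mu' \<omega>)) \<partial>M)"
      unfolding I_def using ii by (intro Bochner_Integration.integral_sum[symmetric]) auto
    also have "\<dots> = (\<integral>\<omega>. real n * norm (g' \<omega>)^2 \<partial>M)"
    proof (rule Bochner_Integration.integral_cong[OF refl])
      fix \<omega>
      have "(\<Sum>i = 1..n. gf i (mu' \<omega>)) = real n *\<^sub>R g' \<omega>"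
        unfolding g'_def gF_eq[of "mu' \<omega>"] using n0 by simp
      then show "(\<Sum>i = 1..n. g' \<omega> \<bullet> gf i (mu' \<omega>)) = real n * norm (g' \<omega>)^2"
        by (simp add: inner_sum_right[symmetric] power2_norm_eq_inner)
    qed
    also have "\<dots> = real n * Gg" unfolding Gg_def by simp
    finally show ?thesis .
  qed
  have suma: "(\<Sum>i = 1..n. a i) \<le> (\<integral>\<omega>. \<Phi>' \<omega> \<partial>M)"
  proof -
    have "(\<Sum>i = 1..n. a i) = (\<integral>\<omega>. (\<Sum>i = 1..n. norm (snd (P' \<omega>) i - mu' \<omega>)^2) \<partial>M)"
      unfolding a_def using w2G by (intro Bochner_Integration.integral_sum[symmetric]) auto
    also have "\<dots> \<le> (\<integral>\<omega>. \<Phi>' \<omega> \<partial>M)"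
    proof (rule integral_mono[OF _ \<Phi>'i])
      show "integrable M (\<lambda>\<omega>. \<Sum>i = 1..n. norm (snd (P' \<omega>) i - mu' \<omega>)^2)"
        using w2G by (intro Bochner_Integration.integrable_sum) auto
      fix \<omega>
      show "(\<Sum>i = 1..n. norm (snd (P' \<omega>) i - mu' \<omega>)^2) \<le> \<Phi>' \<omega>" unfolding \<Phi>'_def
        using zero_le_power2[of "norm (fst (P' \<omega>) - mu' \<omega>)"] by linarith
    qed
    finally show ?thesis .
  qed
  have sumb: "(\<Sum>i = 1..n. b i) \<le> real n * G^2 + real n * B^2 * Gg"
  proof -
    have "(\<Sum>i = 1..n. b i) = (\<integral>\<omega>. (\<Sum>i = 1..n. norm (gf i (mu' \<omega>))^2) \<partial>M)"
      unfolding b_def using Fm2G by (intro Bochner_Integration.integral_sum[symmetric]) auto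
    also have "\<dots> \<le> (\<integral>\<omega>. real n * G^2 + real n * B^2 * norm (g' \<omega>)^2 \<partial>M)"
    proof (rule integral_mono)
      show "integrable M (\<lambda>\<omega>. \<Sum>i = 1..n. norm (gf i (mu' \<omega>))^2)"
        using Fm2G by (intro Bochner_Integration.integrable_sum) auto
      show "integrable M (\<lambda>\<omega>. real n * G^2 + real n * B^2 * norm (g' \<omega>)^2)" using g2 by auto
      fix \<omega>
      have "(\<Sum>i = 1..n. norm (gf i (mu' \<omega>))^2) \<le> real n * (G^2 + B^2 * norm (gF (mu' \<omega>))^2)"
        using dissim[of "mu' \<omega>"] n0 by (simp add: divide_le_eq mult.commute)
      then show "(\<Sum>i = 1..n. norm (gf i (mu' \<omega>))^2) \<le> real n * G^2 + real n * B^2 * norm (g' \<omega>)^2"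
        unfolding g'_def by (simp add: algebra_simps)
    qed
    also have "\<dots> = real n * G^2 + real n * B^2 * Gg" using g2 unfolding Gg_def by (simp add: P.prob_space)
    finally show ?thesis .
  qed
  have e0: "0 \<le> e" unfolding e_def by simp
  have m1: "(20 * L^2) * (\<Sum>i = 1..n. a i) \<le> (20 * L^2) * (\<integral>\<omega>. \<Phi>' \<omega> \<partial>M)"
    by (rule mult_left_mono[OF suma]) simp
  have m2: "e * (\<Sum>i = 1..n. b i) \<le> e * (real n * G^2 + real n * B^2 * Gg)"
    by (rule mult_left_mono[OF sumb e0])
  have eqR: "20 * L^2 * (\<integral>\<omega>. \<Phi>' \<omega> \<partial>M)
       + 4 * real n * L^2 * \<eta>^2 * real K^2 * (\<sigma>^2 + 4 * G^2)
       + real n * (16 * L^2 * \<eta>^2 * real K^2 * B^2 - 3 / 4) * Gg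
     = (20 * L^2) * (\<integral>\<omega>. \<Phi>' \<omega> \<partial>M) + real n * (L^2 * C) + e * (real n * G^2 + real n * B^2 * Gg) - 3/4 * (real n * Gg)"
    by (simp add: C_def e_def algebra_simps)
  have fin: "(\<Sum>i = 1..n. \<integral>\<omega>. gF (\<mu> t \<omega>) \<bullet> (- hc (t + 1) i \<omega>) \<partial>M)
    \<le> 20 * L^2 * (\<integral>\<omega>. \<Phi>' \<omega> \<partial>M)
       + 4 * real n * L^2 * \<eta>^2 * real K^2 * (\<sigma>^2 + 4 * G^2)
       + real n * (16 * L^2 * \<eta>^2 * real K^2 * B^2 - 3 / 4) * Gg"
  proof -
    have "real n * (Gg / 4 + L^2 * C) = real n * Gg / 4 + real n * (L^2 * C)" by (simp add: algebra_simps)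
    then show ?thesis using LHS RHS1 sumI m1 m2 eqR by linarith
  qed
  show ?thesis using fin unfolding Phi_eq grad_eq Gg_def .
qed


end
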